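(* Let $\{(\mathbf{x}^{(i)},y^{(i)})\}_{i=1}^n$ with $\|\mathbf{x}^{(i)}\|_2\le1$, $y^{(i)}\in\{-1,1\}$, and suppose there is $\mathbf{w}^*$ with $\|\mathbf{w}^*\|_2=1$ and $\min_iy^{(i)}\mathbf{x}^{(i)\top}\mathbf{w}^*=\gamma>0$. Let $A$ have rows $y^{(i)}\mathbf{x}^{(i)\top}$ and $\alpha_t=t$. Let $\mathbf{v}_T$ be produced by the Accelerated Perceptron: $\mathbf{q}_0=\tfrac{\mathbf{1}}{n}$, $\mathbf{v}_0=\mathbf{g}_0=\mathbf{0}$, and for $t=1,\dots,T$: $\mathbf{v}_t=\mathbf{v}_{t-1}-\frac{t}{2(t+1)}(\mathbf{g}_{t-1}-A^{\top}\mathbf{q}_{t-1})$, $q_{t,i}=\frac{\exp(-y^{(i)}\mathbf{v}_t^{\top}\mathbf{x}^{(i)})}{\sum_j\exp(-y^{(j)}\mathbf{v}_t^{\top}\mathbf{x}^{(j)})}$, $\mathbf{g}_t=\frac{t}{t+1}(\mathbf{g}_{t-1}-A^{\top}\mathbf{q}_t)$. Let also the game dynamics be: $g(\mathbf{w},\mathbf{p})=\mathbf{p}^{\top}A\mathbf{w}-\tfrac12\|\mathbf{w}\|_2^2$, $\mathbf{p}_0=\tfrac{\mathbf{1}}{n}$, $h_j(\mathbf{w})=-g(\mathbf{w},\mathbf{p}_j)$, $\ell_j(\mathbf{p})=g(\mathbf{w}_j,\mathbf{p})$, $\mathbf{w}_t=\arg\min_{\mathbf{w}\in\mathbb{R}^d}\sum_{j=1}^{t-1}\alpha_jh_j(\mathbf{w})+\alpha_th_{t-1}(\mathbf{w})$,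 $\mathbf{p}_t=\arg\min_{\mathbf{p}\in\Delta^n}\tfrac14\sum_{s=1}^t\alpha_s\ell_s(\mathbf{p})+D_E(\mathbf{p},\tfrac{\mathbf{1}}{n})$ for $t=1,\dots,T$, $\overline{\mathbf{w}}_T=\frac{\sum_t\alpha_t\mathbf{w}_t}{\sum_t\alpha_t}$, with weighted regrets $R^{\mathbf{w}}=\sum_{t=1}^T\alpha_th_t(\mathbf{w}_t)-\min_{\mathbf{w}\in\mathbb{R}^d}\sum_{t=1}^T\alpha_th_t(\mathbf{w})$, $R^{\mathbf{p}}=\sum_{t=1}^T\alpha_t\ell_t(\mathbf{p}_t)-\min_{\mathbf{p}\in\Delta^n}\sum_{t=1}^T\alpha_t\ell_t(\mathbf{p})$. Then $R^{\mathbf{w}}\le2\sum_{t=1}^T\|\mathbf{p}_t-\mathbf{p}_{t-1}\|_1^2$, $R^{\mathbf{p}}\le4\log n-2\sum_{t=1}^T\|\mathbf{p}_t-\mathbf{p}_{t-1}\|_1^2$; there is a universal constant $C>0$ such that $\overline{\mathbf{w}}_T$ has non-negative margin ($\min_iy^{(i)}\mathbf{x}^{(i)\top}\overline{\mathbf{w}}_T\ge0$) whenever $T\ge C\sqrt{\log n}/\gamma$; and the normalized margin satisfies $\overline{\gamma}(\mathbf{v}_T)=\Omega\!\left(\gamma-\frac{8\log n}{\gamma T(T+1)}\right)$.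
   Context: $\Delta^n$ is the probability simplex; $\mathbf{1}$ the all-ones vector; $D_E(\mathbf{p},\mathbf{q})=\sum_ip_i\log(p_i/q_i)$. The normalized margin of $\mathbf{v}\ne\mathbf{0}$ is $\overline{\gamma}(\mathbf{v})=\frac{\min_{\mathbf{p}\in\Delta^n}\mathbf{p}^{\top}A\mathbf{v}}{\|\mathbf{v}\|_2}=\frac{\min_iy^{(i)}\mathbf{x}^{(i)\top}\mathbf{v}}{\|\mathbf{v}\|_2}$. *)

theory Defs
  imports Complex_Main
begin

text \<open>Vectors of R^d are represented as functions nat => real vanishing at indices >= d,
  so that the dimension d is an ordinary (quantifiable) natural number.\<close>

definition Rd :: "nat \<Rightarrow> (nat \<Rightarrow> real) set" where
  "Rd d = {v. \<forall>k\<ge>d. v k = 0}"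

definition ip :: "nat \<Rightarrow> (nat \<Rightarrow> real) \<Rightarrow> (nat \<Rightarrow> real) \<Rightarrow> real" where
  "ip d u v = (\<Sum>k<d. u k * v k)"

definition nrm :: "nat \<Rightarrow> (nat \<Rightarrow> real) \<Rightarrow> real" where
  "nrm d v = sqrt (ip d v v)"

definition simplex :: "nat \<Rightarrow> (nat \<Rightarrow> real) set" where
  "simplex n = {p. (\<forall>i<n. 0 \<le> p i) \<and> (\<Sum>i<n. p i) = 1 \<and> (\<forall>i\<ge>n. p i = 0)}"

definition unif :: "nat \<Rightarrow> nat \<Rightarrow> real" where
  "unif n = (\<lambda>i. if i < n then 1 / real n else 0)"

definition Atp :: "nat \<Rightarrow> (nat \<Rightarrow> nat \<Rightarrow> real) \<Rightarrow> (nat \<Rightarrow> real) \<Rightarrow> (nat \<Rightarrow> real) \<Rightarrow> nat \<Rightarrow> real" where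
  "Atp n x y q = (\<lambda>k. \<Sum>i<n. q i * y i * x i k)"

definition pAw :: "nat \<Rightarrow> nat \<Rightarrow> (nat \<Rightarrow> nat \<Rightarrow> real) \<Rightarrow> (nat \<Rightarrow> real) \<Rightarrow> (nat \<Rightarrow> real) \<Rightarrow> (nat \<Rightarrow> real) \<Rightarrow> real" where
  "pAw n d x y p w = (\<Sum>i<n. p i * (y i * ip d (x i) w))"

definition gpay :: "nat \<Rightarrow> nat \<Rightarrow> (nat \<Rightarrow> nat \<Rightarrow> real) \<Rightarrow> (nat \<Rightarrow> real) \<Rightarrow> (nat \<Rightarrow> real) \<Rightarrow> (nat \<Rightarrow> real) \<Rightarrow> real" where
  "gpay n d x y w p = pAw n d x y p w - 1/2 * (nrm d w)\<^sup>2"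

text \<open>relative entropy D_E(p,q) = sum_i p_i log(p_i/q_i) (terms with p_i = 0 vanish)\<close>
definition DE :: "nat \<Rightarrow> (nat \<Rightarrow> real) \<Rightarrow> (nat \<Rightarrow> real) \<Rightarrow> real" where
  "DE n p q = (\<Sum>i<n. p i * ln (p i / q i))"

definition l1 :: "nat \<Rightarrow> (nat \<Rightarrow> real) \<Rightarrow> (nat \<Rightarrow> real) \<Rightarrow> real" where
  "l1 n p q = (\<Sum>i<n. \<bar>p i - q i\<bar>)"

definition margin :: "nat \<Rightarrow> nat \<Rightarrow> (nat \<Rightarrow> nat \<Rightarrow> real) \<Rightarrow> (nat \<Rightarrow> real) \<Rightarrow> (nat \<Rightarrow> real) \<Rightarrow> real" where
  "margin n d x y v = Min ((\<lambda>i. y i * ip d (x i) v) ` {..<n})"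

definition nmargin :: "nat \<Rightarrow> nat \<Rightarrow> (nat \<Rightarrow> nat \<Rightarrow> real) \<Rightarrow> (nat \<Rightarrow> real) \<Rightarrow> (nat \<Rightarrow> real) \<Rightarrow> real" where
  "nmargin n d x y v = margin n d x y v / nrm d v"

definition data_ok :: "nat \<Rightarrow> nat \<Rightarrow> (nat \<Rightarrow> nat \<Rightarrow> real) \<Rightarrow> (nat \<Rightarrow> real) \<Rightarrow> real \<Rightarrow> bool" where
  "data_ok n d x y \<gamma> \<longleftrightarrow> 1 \<le> n \<and>
     (\<forall>i<n. x i \<in> Rd d \<and> nrm d (x i) \<le> 1 \<and> (y i = -1 \<or> y i = 1)) \<and>
     (\<exists>ws \<in> Rd d. nrm d ws = 1 \<and> margin n d x y ws = \<gamma>) \<and> 0 < \<gamma>"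

fun accp :: "nat \<Rightarrow> nat \<Rightarrow> (nat \<Rightarrow> nat \<Rightarrow> real) \<Rightarrow> (nat \<Rightarrow> real) \<Rightarrow> nat
      \<Rightarrow> (nat \<Rightarrow> real) \<times> (nat \<Rightarrow> real) \<times> (nat \<Rightarrow> real)" where
  "accp n d x y 0 = ((\<lambda>k. 0), unif n, (\<lambda>k. 0))"
| "accp n d x y (Suc t) =
     (let (v, q, g) = accp n d x y t;
          s = real (Suc t);
          v' = (\<lambda>k. v k - s / (2 * (s + 1)) * (g k - Atp n x y q k));
          Z = (\<Sum>j<n. exp (- y j * ip d v' (x j)));
          q' = (\<lambda>i. if i < n then exp (- y i * ip d v' (x i)) / Z else 0);
          g' = (\<lambda>k. s / (s + 1) * (g k - Atp n x y q' k))
      in (v', q', g'))"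

definition vT :: "nat \<Rightarrow> nat \<Rightarrow> (nat \<Rightarrow> nat \<Rightarrow> real) \<Rightarrow> (nat \<Rightarrow> real) \<Rightarrow> nat \<Rightarrow> nat \<Rightarrow> real" where
  "vT n d x y T = fst (accp n d x y T)"

definition hloss where
  "hloss n d x y p j w = - gpay n d x y w (p j)"

definition lloss where
  "lloss n d x y w j q = gpay n d x y (w j) q"

definition game_dyn :: "nat \<Rightarrow> nat \<Rightarrow> (nat \<Rightarrow> nat \<Rightarrow> real) \<Rightarrow> (nat \<Rightarrow> real) \<Rightarrow> nat
    \<Rightarrow> (nat \<Rightarrow> nat \<Rightarrow> real) \<Rightarrow> (nat \<Rightarrow> nat \<Rightarrow> real) \<Rightarrow> bool" where
  "game_dyn n d x y T w p \<longleftrightarrow>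
     p 0 = unif n \<and>
     (\<forall>t\<in>{1..T}.
        w t \<in> Rd d \<and>
        (\<forall>u\<in>Rd d.
           (\<Sum>j=1..t-1. real j * hloss n d x y p j (w t)) + real t * hloss n d x y p (t-1) (w t)
         \<le> (\<Sum>j=1..t-1. real j * hloss n d x y p j u) + real t * hloss n d x y p (t-1) u)) \<and>
     (\<forall>t\<in>{1..T}.
        p t \<in> simplex n \<and>
        (\<forall>q\<in>simplex n.
           1/4 * (\<Sum>s=1..t. real s * lloss n d x y w s (p t)) + DE n (p t) (unif n)
         \<le> 1/4 * (\<Sum>s=1..t. real s * lloss n d x y w s q) + DE n q (unif n)))"

definition regret_w where
  "regret_w n d x y T w p =
     (\<Sum>t=1..T. real t * hloss n d x y p t (w t))
     - (INF u\<in>Rd d. \<Sum>t=1..T. real t * hloss n d x y p t u)"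

definition regret_p where
  "regret_p n d x y T w p =
     (\<Sum>t=1..T. real t * lloss n d x y w t (p t))
     - (INF q\<in>simplex n. \<Sum>t=1..T. real t * lloss n d x y w t q)"

definition wbar :: "nat \<Rightarrow> (nat \<Rightarrow> nat \<Rightarrow> real) \<Rightarrow> nat \<Rightarrow> real" where
  "wbar T w = (\<lambda>k. (\<Sum>t=1..T. real t * w t k) / (\<Sum>t=1..T. real t))"

end

theory Submission
  imports Defs "HOL-Analysis.Convex"
begin


lemma ln_bound_ge:
  fixes x :: real assumes "1 \<le> x" shows "2*(x-1)/(x+1) \<le> ln x"
proof -
  let ?f = "\<lambda>x::real. ln x - 2*(x-1)/(x+1)"
  have "?f 1 \<le> ?f x"
  proof (rule deriv_nonneg_imp_mono[where g = ?f and g' = "\<lambda>x. 1/x - 4/(x+1)^2"])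
    fix z :: real assume z: "z \<in> {1..x}"
    then have zp: "z > 0" by auto
    show "(?f has_real_derivative 1/z - 4/(z+1)^2) (at z)"
      using zp by (auto intro!: derivative_eq_intros simp: field_simps power2_eq_square)
    have "(z+1)^2 - 4*z = (z-1)^2" by (simp add: power2_eq_square algebra_simps)
    then have "4*z \<le> (z+1)^2" by (smt (verit) zero_le_power2)
    then show "0 \<le> 1/z - 4/(z+1)^2" using zp by (simp add: field_simps)
  qed (use assms in auto)
  then show ?thesis by simp
qed

lemma ln_bound_le:
  fixes x :: real assumes "0 < x" "x \<le> 1" shows "ln x \<le> 2*(x-1)/(x+1)"
proof -
  let ?f = "\<lambda>x::real. ln x - 2*(x-1)/(x+1)"
  have "?f x \<le> ?f 1"
  proof (rule deriv_nonneg_imp_mono[where g = ?f and g' = "\<lambda>x. 1/x - 4/(x+1)^2"])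
    fix z :: real assume z: "z \<in> {x..1}"
    then have zp: "z > 0" using assms by auto
    show "(?f has_real_derivative 1/z - 4/(z+1)^2) (at z)"
      using zp by (auto intro!: derivative_eq_intros simp: field_simps power2_eq_square)
    have "(z+1)^2 - 4*z = (z-1)^2" by (simp add: power2_eq_square algebra_simps)
    then have "4*z \<le> (z+1)^2" by (smt (verit) zero_le_power2)
    then show "0 \<le> 1/z - 4/(z+1)^2" using zp by (simp add: field_simps)
  qed (use assms in auto)
  then show ?thesis by simp
qed

lemma phi_bound:
  fixes x :: real assumes "0 \<le> x"
  shows "3*(x-1)^2/(2*(x+2)) \<le> x * ln x - x + 1"
proof (cases "x = 0")
  case True then show ?thesis by simp
next
  case False
  then have xp: "x > 0" using assms by auto
  let ?f = "\<lambda>x::real. x * ln x - x + 1 - 3*(x-1)^2/(2*(x+2))"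
  let ?f' = "\<lambda>x::real. ln x - 3*(x-1)*(x+5)/(2*(x+2)^2)"
  have der: "(?f has_real_derivative ?f' z) (at z)" if "z > 0" for z
  proof -
    have d1: "(?f has_real_derivative (ln z + z * (1/z)) - 1 - 3*(2*(z-1)*(2*(z+2)) - (z-1)^2*2)/(2*(z+2))^2) (at z)"
      using that by (auto intro!: derivative_eq_intros simp: power2_eq_square)
    have e1: "(ln z + z * (1/z)) - 1 - 3*(2*(z-1)*(2*(z+2)) - (z-1)^2*2)/(2*(z+2))^2 = ?f' z"
    proof -
      have "z + 2 \<noteq> 0" "z \<noteq> 0" using that by auto
      have "3*(2*(z-1)*(2*(z+2)) - (z-1)^2*2)/(2*(z+2))^2 = (2*(3*(z-1)*(z+5)))/(2*(2*(z+2)^2))"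
        by (simp add: power2_eq_square algebra_simps)
      also have "\<dots> = 3*(z-1)*(z+5)/(2*(z+2)^2)" by (rule mult_divide_mult_cancel_left) simp
      finally show ?thesis using that by simp

    qed
    show ?thesis using d1 unfolding e1 .
  qed
  have key: "3*(z-1)*(z+5)/(2*(z+2)^2) \<le> 2*(z-1)/(z+1) \<longleftrightarrow> z \<ge> 1" if "z > 0" for z :: real
  proof -
    have "3*(z-1)*(z+5)/(2*(z+2)^2) \<le> 2*(z-1)/(z+1) \<longleftrightarrow> 3*(z-1)*(z+5)*(z+1) \<le> 2*(z-1)*(2*(z+2)^2)"
      using that by (simp add: field_simps)
    also have "\<dots> \<longleftrightarrow> 0 \<le> (z-1)^3"
      by (simp add: algebra_simps power2_eq_square power3_eq_cube)
    also have "\<dots> \<longleftrightarrow> z \<ge> 1" by simp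
    finally show ?thesis .
  qed
  have "?f 1 \<le> ?f x"
  proof (cases "x \<ge> 1")
    case True
    show ?thesis
    proof (rule deriv_nonneg_imp_mono[where g = ?f and g' = ?f'])
      fix z assume z: "z \<in> {1..x}"
      then show "(?f has_real_derivative ?f' z) (at z)" using der by auto
      have "3*(z-1)*(z+5)/(2*(z+2)^2) \<le> 2*(z-1)/(z+1)" using key[of z] z by auto
      then show "0 \<le> ?f' z" using ln_bound_ge[of z] z by auto
    qed (use True in auto)
  next
    case False
    show ?thesis
    proof (rule deriv_nonpos_imp_antimono[where g = ?f and g' = ?f'])
      fix z assume z: "z \<in> {x..1}"
      then have zp: "z > 0" using xp by auto
      then show "(?f has_real_derivative ?f' z) (at z)" using der by auto
      show "?f' z \<le> 0"
      proof (cases "z = 1")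
        case True then show ?thesis by simp
      next
        case False
        then have "2*(z-1)/(z+1) \<le> 3*(z-1)*(z+5)/(2*(z+2)^2)" using key[of z] z zp by auto
        then show ?thesis using ln_bound_le[of z] z zp by auto
      qed
    qed (use False in auto)
  qed
  then show ?thesis by simp
qed

lemma pinsker_term:
  fixes a b :: real assumes "0 \<le> a" "0 < b"
  shows "3*(a-b)^2/(2*(a+2*b)) \<le> a * ln (a/b) - a + b"
proof -
  have "3*(a/b-1)^2/(2*(a/b+2)) \<le> (a/b) * ln (a/b) - a/b + 1"
    by (rule phi_bound) (use assms in simp)
  then have "b * (3*(a/b-1)^2/(2*(a/b+2))) \<le> b * ((a/b) * ln (a/b) - a/b + 1)"
    by (rule mult_left_mono) (use assms in simp)
  moreover have "b * (3*(a/b-1)^2/(2*(a/b+2))) = 3*(a-b)^2/(2*(a+2*b))"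
  proof -
    have e: "a/b - 1 = (a-b)/b" "a/b + 2 = (a+2*b)/b" using assms by (simp_all add: field_simps)
    have "a + 2*b > 0" using assms by simp
    then show ?thesis unfolding e using assms
      by (simp add: power_divide divide_simps) (simp add: algebra_simps power2_eq_square)
  qed
  moreover have "b * ((a/b) * ln (a/b) - a/b + 1) = a * ln (a/b) - a + b"
    using assms by (simp add: field_simps)
  ultimately show ?thesis by simp
qed

lemma weighted_cs:
  fixes d w :: "nat \<Rightarrow> real"
  assumes "\<And>i. i \<in> I \<Longrightarrow> w i > 0"
  shows "(\<Sum>i\<in>I. \<bar>d i\<bar>)^2 \<le> (\<Sum>i\<in>I. w i) * (\<Sum>i\<in>I. (d i)^2 / w i)"
proof -
  have "(\<Sum>i\<in>I. \<bar>d i\<bar>) = (\<Sum>i\<in>I. sqrt (w i) * (\<bar>d i\<bar> / sqrt (w i)))"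
  proof (rule sum.cong)
    fix i assume "i \<in> I"
    then have "w i > 0" using assms by auto
    then show "\<bar>d i\<bar> = sqrt (w i) * (\<bar>d i\<bar> / sqrt (w i))" by simp
  qed simp
  also have "(\<dots>)^2 \<le> (\<Sum>i\<in>I. (sqrt (w i))^2) * (\<Sum>i\<in>I. (\<bar>d i\<bar> / sqrt (w i))^2)"
    by (rule Cauchy_Schwarz_ineq_sum)
  also have "\<dots> = (\<Sum>i\<in>I. w i) * (\<Sum>i\<in>I. (d i)^2 / w i)"
  proof -
    have "(\<Sum>i\<in>I. (sqrt (w i))^2) = (\<Sum>i\<in>I. w i)"
    proof (rule sum.cong)
      fix i assume "i \<in> I"
      then have "w i > 0" using assms by auto
      then show "(sqrt (w i))^2 = w i" by simp
    qed simp
    moreover have "(\<Sum>i\<in>I. (\<bar>d i\<bar> / sqrt (w i))^2) = (\<Sum>i\<in>I. (d i)^2 / w i)"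
    proof (rule sum.cong)
      fix i assume "i \<in> I"
      then have "w i > 0" using assms by auto
      then show "(\<bar>d i\<bar> / sqrt (w i))^2 = (d i)^2 / w i" by (simp add: power_divide)
    qed simp
    ultimately show ?thesis by simp
  qed
  finally show ?thesis .
qed

lemma pinsker:
  assumes p: "p \<in> simplex n" and q: "q \<in> simplex n" and qpos: "\<And>i. i < n \<Longrightarrow> q i > 0"
  shows "(l1 n p q)^2 / 2 \<le> DE n p q"
proof -
  have p0: "\<And>i. i < n \<Longrightarrow> 0 \<le> p i" and ps: "(\<Sum>i<n. p i) = 1" and qs: "(\<Sum>i<n. q i) = 1"
    using p q by (auto simp: simplex_def)
  have "(l1 n p q)^2 \<le> (\<Sum>i<n. p i + 2 * q i) * (\<Sum>i<n. (p i - q i)^2 / (p i + 2 * q i))"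
    unfolding l1_def by (rule weighted_cs) (use p0 qpos in \<open>fastforce\<close>)
  also have "(\<Sum>i<n. p i + 2 * q i) = 3" using ps qs by (simp add: sum.distrib sum_distrib_left[symmetric])
  finally have A0: "(l1 n p q)^2 \<le> 3 * (\<Sum>i<n. (p i - q i)^2 / (p i + 2 * q i))" .
  have "(\<Sum>i<n. 3 * (p i - q i)^2 / (2 * (p i + 2 * q i))) = 3/2 * (\<Sum>i<n. (p i - q i)^2 / (p i + 2 * q i))"
    by (simp add: sum_distrib_left)
  with A0 have A: "(l1 n p q)^2 / 2 \<le> (\<Sum>i<n. 3 * (p i - q i)^2 / (2 * (p i + 2 * q i)))"
    by simp
  also have "\<dots> \<le> (\<Sum>i<n. p i * ln (p i / q i) - p i + q i)"
    by (rule sum_mono, rule pinsker_term) (use p0 qpos in auto)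
  also have "\<dots> = DE n p q" using ps qs by (simp add: DE_def sum.distrib sum_subtractf)
  finally show ?thesis .
qed

definition smax :: "nat \<Rightarrow> (nat \<Rightarrow> real) \<Rightarrow> nat \<Rightarrow> real" where
  "smax n c = (\<lambda>i. if i < n then exp (- c i / 4) / (\<Sum>j<n. exp (- c j / 4)) else 0)"

lemma smax_Z_pos: "1 \<le> (n::nat) \<Longrightarrow> (\<Sum>j<n. exp (- c j / 4)) > (0::real)"
  by (rule sum_pos) (auto simp: lessThan_empty_iff)

lemma smax_pos: "1 \<le> (n::nat) \<Longrightarrow> i < n \<Longrightarrow> smax n c i > 0"
  using smax_Z_pos[of n c] by (simp add: smax_def)

lemma smax_simplex: "1 \<le> n \<Longrightarrow> smax n c \<in> simplex n"
  using smax_Z_pos[of n c] smax_pos[of n _ c]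
  by (auto simp: simplex_def less_imp_le smax_def sum_divide_distrib[symmetric])

lemma unif_simplex: "1 \<le> n \<Longrightarrow> unif n \<in> simplex n"
  by (auto simp: simplex_def unif_def)

lemma DE_self: "DE n p p = 0"
  by (auto simp: DE_def intro!: sum.neutral)

lemma F_ident:
  assumes n: "1 \<le> n" and q: "q \<in> simplex n"
  shows "(\<Sum>i<n. c i * q i) + 4 * DE n q (unif n)
       = 4 * DE n q (smax n c) + 4 * ln (real n) - 4 * ln (\<Sum>j<n. exp (- c j / 4))"
proof -
  define Z where "Z = (\<Sum>j<n. exp (- c j / 4))"
  have Z: "Z > 0" using smax_Z_pos[OF n] by (simp add: Z_def)
  have q0: "\<And>i. i < n \<Longrightarrow> 0 \<le> q i" and qs: "(\<Sum>i<n. q i) = 1" using q by (auto simp: simplex_def)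
  have "(\<Sum>i<n. c i * q i + 4 * (q i * ln (q i / unif n i)))
      = (\<Sum>i<n. 4 * (q i * ln (q i / smax n c i)) + q i * (4 * ln (real n) - 4 * ln Z))"
  proof (rule sum.cong)
    fix i assume i: "i \<in> {..<n}"
    show "c i * q i + 4 * (q i * ln (q i / unif n i))
        = 4 * (q i * ln (q i / smax n c i)) + q i * (4 * ln (real n) - 4 * ln Z)"
    proof (cases "q i = 0")
      case True then show ?thesis by simp
    next
      case False
      then have qp: "q i > 0" using q0[of i] i by auto
      have l1e: "ln (q i / unif n i) = ln (q i) + ln (real n)"
        using i qp n by (simp add: unif_def ln_mult)
      have sm: "smax n c i = exp (- c i / 4) / Z" using i by (simp add: smax_def Z_def)
      have l2e: "ln (q i / smax n c i) = ln (q i) + c i / 4 + ln Z"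
        unfolding sm using i qp Z by (simp add: ln_div ln_mult)
      show ?thesis unfolding l1e l2e by (simp add: algebra_simps)
    qed
  qed simp
  then show ?thesis
    using qs by (simp add: DE_def sum.distrib sum_distrib_left[symmetric] sum_distrib_right[symmetric] Z_def
       flip: sum_distrib_left)
qed

lemma DE_nonneg:
  assumes "1 \<le> n" "q \<in> simplex n" "p \<in> simplex n" "\<And>i. i < n \<Longrightarrow> p i > 0"
  shows "0 \<le> DE n q p"
  using pinsker[of q n p] assms by (smt (verit) zero_le_power2 divide_nonneg_nonneg)

lemma DE_unif_le:
  assumes n: "1 \<le> n" and q: "q \<in> simplex n"
  shows "DE n q (unif n) \<le> ln (real n)"
proof -
  have q0: "\<And>i. i < n \<Longrightarrow> 0 \<le> q i" and qs: "(\<Sum>i<n. q i) = 1"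
    using q by (auto simp: simplex_def)
  have q1: "q i \<le> 1" if "i < n" for i
  proof -
    have "q i \<le> (\<Sum>i<n. q i)" by (rule member_le_sum) (use that q0 in auto)
    then show ?thesis using qs by simp
  qed
  have "DE n q (unif n) = (\<Sum>i<n. q i * ln (q i) + q i * ln (real n))"
  proof (unfold DE_def, rule sum.cong)
    fix i assume i: "i \<in> {..<n}"
    show "q i * ln (q i / unif n i) = q i * ln (q i) + q i * ln (real n)"
    proof (cases "q i = 0")
      case False
      then have "q i > 0" using q0[of i] i by auto
      then show ?thesis using i n by (simp add: unif_def ln_mult algebra_simps)
    qed simp
  qed simp
  also have "\<dots> \<le> (\<Sum>i<n. q i * ln (real n))"
  proof (rule sum_mono)
    fix i assume i: "i \<in> {..<n}"
    have "q i * ln (q i) \<le> 0"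
    proof (cases "q i = 0")
      case False
      then have "q i > 0" using q0[of i] i by auto
      then show ?thesis using q1[of i] i by (simp add: mult_nonneg_nonpos)
    qed simp
    then show "q i * ln (q i) + q i * ln (real n) \<le> q i * ln (real n)" by simp
  qed
  also have "\<dots> = ln (real n)" using qs by (simp add: sum_distrib_right[symmetric])
  finally show ?thesis .
qed

lemma strong_min:
  assumes n: "1 \<le> n" and x: "x \<in> simplex n"
    and min: "\<forall>q\<in>simplex n. (\<Sum>i<n. c i * x i) + K + 4 * DE n x (unif n) \<le> (\<Sum>i<n. c i * q i) + K + 4 * DE n q (unif n)"
    and y: "y \<in> simplex n"
  shows "(\<Sum>i<n. c i * x i) + K + 4 * DE n x (unif n) + 2 * (l1 n y x)^2 \<le> (\<Sum>i<n. c i * y i) + K + 4 * DE n y (unif n)"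
proof -
  define s where "s = smax n c"
  have s: "s \<in> simplex n" "\<And>i. i < n \<Longrightarrow> s i > 0" using smax_simplex[OF n] smax_pos[OF n] by (auto simp: s_def)
  have "4 * DE n x s \<le> 4 * DE n s s"
    using min[rule_format, OF s(1)] F_ident[OF n x, of c] F_ident[OF n s(1), of c] by (simp add: s_def)
  then have "DE n x s \<le> 0" by (simp add: DE_self)
  with pinsker[OF x s] have "(l1 n x s)^2 \<le> 0" by linarith
  then have "l1 n x s = 0" by simp
  then have xs: "\<forall>i<n. x i = s i"
    unfolding l1_def by (subst (asm) sum_nonneg_eq_0_iff) auto
  then have l1eq: "l1 n y x = l1 n y s" by (simp add: l1_def)
  have DEx: "DE n x s = 0" using xs DE_self[of n s] by (simp add: DE_def)
  have "(l1 n y s)^2 / 2 \<le> DE n y s" by (rule pinsker[OF y s])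
  then show ?thesis
    using F_ident[OF n x, of c] F_ident[OF n y, of c] DEx l1eq by (simp add: s_def)
qed



lemma ip_nonneg: "0 \<le> ip d v v"
  by (simp add: ip_def sum_nonneg)

lemma nrm_sq: "(nrm d v)^2 = ip d v v"
  by (simp add: nrm_def ip_nonneg)

lemma pAw_ip: "pAw n d x y q w = ip d (Atp n x y q) w"
proof -
  have "pAw n d x y q w = (\<Sum>i<n. \<Sum>k<d. q i * y i * x i k * w k)"
    unfolding pAw_def ip_def by (simp add: sum_distrib_left mult.assoc)
  also have "\<dots> = (\<Sum>k<d. \<Sum>i<n. q i * y i * x i k * w k)" by (rule sum.swap)
  also have "\<dots> = ip d (Atp n x y q) w"
    unfolding ip_def Atp_def by (simp add: sum_distrib_right)
  finally show ?thesis .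
qed

lemma hloss_eq: "hloss n d x y p j u = (\<Sum>k<d. - (Atp n x y (p j) k) * u k + (u k)^2 / 2)"
proof -
  have e: "1/2 * ip d u u = (\<Sum>k<d. (u k)^2 / 2)"
    by (simp add: ip_def sum_distrib_left power2_eq_square)
  have "hloss n d x y p j u = - ip d (Atp n x y (p j)) u + 1/2 * ip d u u"
    unfolding hloss_def gpay_def pAw_ip nrm_sq by simp
  also have "\<dots> = (\<Sum>k<d. - (Atp n x y (p j)) k * u k) + (\<Sum>k<d. (u k)^2 / 2)"
    unfolding e by (simp add: ip_def sum_negf)
  also have "\<dots> = (\<Sum>k<d. - (Atp n x y (p j)) k * u k + (u k)^2 / 2)"
    by (rule sum.distrib[symmetric])
  finally show ?thesis .
qed

lemma aux_lin: "(\<Sum>j\<in>J. f j * (- g j * u + v)) = - (\<Sum>j\<in>J. f j * g j) * u + (\<Sum>j\<in>J. f j) * (v::real)"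
proof -
  have "(\<Sum>j\<in>J. f j * (- g j * u + v)) = (\<Sum>j\<in>J. f j * v - f j * g j * u)"
    by (rule sum.cong) (simp_all add: algebra_simps)
  also have "\<dots> = (\<Sum>j\<in>J. f j * v) - (\<Sum>j\<in>J. f j * g j * u)" by (rule sum_subtractf)
  also have "\<dots> = - (\<Sum>j\<in>J. f j * g j) * u + (\<Sum>j\<in>J. f j) * v"
    by (simp add: sum_distrib_right)
  finally show ?thesis .
qed

lemma sum_hloss:
  "(\<Sum>j\<in>J. real j * hloss n d x y p j u)
   = (\<Sum>k<d. - (\<Sum>j\<in>J. real j * Atp n x y (p j) k) * u k + (\<Sum>j\<in>J. real j) * ((u k)^2 / 2))"
proof -
  have "(\<Sum>j\<in>J. real j * hloss n d x y p j u)
      = (\<Sum>j\<in>J. \<Sum>k<d. real j * (- (Atp n x y (p j) k) * u k + (u k)^2 / 2))"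
    unfolding hloss_eq by (simp add: sum_distrib_left)
  also have "\<dots> = (\<Sum>k<d. \<Sum>j\<in>J. real j * (- (Atp n x y (p j) k) * u k + (u k)^2 / 2))"
    by (rule sum.swap)
  also have "\<dots> = (\<Sum>k<d. - (\<Sum>j\<in>J. real j * Atp n x y (p j) k) * u k + (\<Sum>j\<in>J. real j) * ((u k)^2 / 2))"
    by (rule sum.cong[OF refl], rule aux_lin)
  finally show ?thesis .
qed

lemma sum_real_Icc: "(\<Sum>j=1..m. real j) = real m * (real m + 1) / 2"
  by (induction m) (auto simp: algebra_simps)


lemma quad_scalar:
  fixes S b w :: real assumes "S > 0"
  shows "(- b * w + S * w^2 / 2) - (- b * (b/S) + S * (b/S)^2 / 2) = S / 2 * (w - b / S)^2"
  using assms by (simp add: field_simps power2_eq_square)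

lemma quad_min:
  fixes B :: "nat \<Rightarrow> real"
  assumes S: "S > 0"
    and min: "\<forall>u\<in>Rd d. (\<Sum>k<d. - B k * w k + S * ((w k)^2 / 2)) \<le> (\<Sum>k<d. - B k * u k + S * ((u k)^2 / 2))"
    and k: "k < d"
  shows "w k = B k / S"
proof -
  define m where "m = (\<lambda>k. if k < d then B k / S else 0)"
  have m: "m \<in> Rd d" by (simp add: m_def Rd_def)
  have "(\<Sum>k<d. - B k * w k + S * ((w k)^2 / 2)) - (\<Sum>k<d. - B k * m k + S * ((m k)^2 / 2))
      = (\<Sum>k<d. (- B k * w k + S * ((w k)^2 / 2)) - (- B k * m k + S * ((m k)^2 / 2)))"
    by (rule sum_subtractf[symmetric])
  also have "\<dots> = (\<Sum>k<d. S / 2 * (w k - B k / S)^2)"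
  proof (rule sum.cong[OF refl])
    fix k assume "k \<in> {..<d}"
    then have "m k = B k / S" by (simp add: m_def)
    then show "(- B k * w k + S * ((w k)^2 / 2)) - (- B k * m k + S * ((m k)^2 / 2)) = S / 2 * (w k - B k / S)^2"
      using quad_scalar[OF S, of "B k" "w k"] by simp
  qed
  finally have eq: "(\<Sum>k<d. - B k * w k + S * ((w k)^2 / 2)) - (\<Sum>k<d. - B k * m k + S * ((m k)^2 / 2))
      = (\<Sum>k<d. S / 2 * (w k - B k / S)^2)" .
  have le: "(\<Sum>k<d. S / 2 * (w k - B k / S)^2) \<le> 0" using min[rule_format, OF m] eq by linarith
  have nn: "\<forall>k\<in>{..<d}. 0 \<le> S / 2 * (w k - B k / S)^2" using S by auto
  then have "0 \<le> (\<Sum>k<d. S / 2 * (w k - B k / S)^2)" by (intro sum_nonneg) auto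
  with le have "(\<Sum>k<d. S / 2 * (w k - B k / S)^2) = 0" by linarith
  then have "\<forall>k\<in>{..<d}. S / 2 * (w k - B k / S)^2 = 0"
    using sum_nonneg_eq_0_iff[of "{..<d}" "\<lambda>k. S / 2 * (w k - B k / S)^2"] nn by blast
  then show ?thesis using k S by auto
qed

lemma step_scalar:
  fixes tt A a a' w S S' :: real
  assumes tt: "tt \<ge> 1" and S: "S = tt * (tt + 1) / 2" and S': "S' = (tt - 1) * tt / 2"
    and w: "w = (A + tt * a') / S" and A0: "tt = 1 \<longrightarrow> A = 0"
  shows "tt * (- a * w + w^2 / 2) \<le> A^2 / (2 * S') - (A + tt * a)^2 / (2 * S) + (a - a')^2"
proof -
  have "0 < tt * (tt + 1)" using tt by (intro mult_pos_pos) auto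
  then have Sp: "S > 0" using S by simp
  have hA: "A = S * w - tt * a'" using w Sp by (simp add: field_simps)
  have S'eq: "S' = S - tt" using S S' by (simp add: field_simps)
  have id: "tt * (- a * w + w^2 / 2) = A * w - S' * w^2 / 2 - (A + tt * a)^2 / (2 * S) + tt^2 * (a - a')^2 / (2 * S)"
    unfolding hA S'eq using Sp by (simp add: field_simps power2_eq_square)
  have c1: "A * w - S' * w^2 / 2 \<le> A^2 / (2 * S')"
  proof (cases "tt = 1")
    case True
    then show ?thesis using A0 S' by simp
  next
    case False
    then have "0 < (tt - 1) * tt" using tt by (intro mult_pos_pos) auto
    then have S'p: "S' > 0" using S' by simp
    have "A^2 / (2 * S') - (A * w - S' * w^2 / 2) = (A - S' * w)^2 / (2 * S')"
      using S'p by (simp add: field_simps power2_eq_square)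
    moreover have "(A - S' * w)^2 / (2 * S') \<ge> 0" using S'p by simp
    ultimately show ?thesis by linarith
  qed
  have c2: "tt^2 * (a - a')^2 / (2 * S) \<le> (a - a')^2"
  proof -
    have "tt^2 / (2 * S) \<le> 1" using Sp tt S by (simp add: field_simps power2_eq_square)
    then have "tt^2 / (2 * S) * (a - a')^2 \<le> 1 * (a - a')^2" by (rule mult_right_mono) simp
    then show ?thesis by simp
  qed
  show ?thesis using id c1 c2 by linarith
qed



definition AA :: "nat \<Rightarrow> (nat \<Rightarrow> nat \<Rightarrow> real) \<Rightarrow> (nat \<Rightarrow> real) \<Rightarrow> (nat \<Rightarrow> nat \<Rightarrow> real) \<Rightarrow> nat \<Rightarrow> nat \<Rightarrow> real" where
  "AA n x y p m k = (\<Sum>j=1..m. real j * Atp n x y (p j) k)"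

definition SS :: "nat \<Rightarrow> real" where
  "SS m = real m * (real m + 1) / 2"

lemma SS_pos: "1 \<le> m \<Longrightarrow> SS m > 0"
  by (simp add: SS_def)

lemma SS_Suc: "SS (Suc m) = SS m + real (Suc m)"
  by (simp add: SS_def field_simps)

lemma SS_sum: "(\<Sum>j=1..m. real j) = SS m"
  using sum_real_Icc[of m] by (simp add: SS_def)

lemma AA_Suc: "AA n x y p (Suc m) k = AA n x y p m k + real (Suc m) * Atp n x y (p (Suc m)) k"
  by (simp add: AA_def)

lemma obj_form:
  assumes t: "1 \<le> t"
  shows "(\<Sum>j=1..t-1. real j * hloss n d x y p j u) + real t * hloss n d x y p (t-1) u
   = (\<Sum>k<d. - (AA n x y p (t-1) k + real t * Atp n x y (p (t-1)) k) * u k + SS t * ((u k)^2/2))"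
proof -
  have SSt: "SS (t-1) + real t = SS t" using t SS_Suc[of "t-1"] by simp
  have "(\<Sum>j=1..t-1. real j * hloss n d x y p j u) + real t * hloss n d x y p (t-1) u
      = (\<Sum>k<d. - AA n x y p (t-1) k * u k + SS (t-1) * ((u k)^2/2))
        + (\<Sum>k<d. real t * (- Atp n x y (p (t-1)) k * u k + (u k)^2 / 2))"
    unfolding sum_hloss SS_sum by (simp only: AA_def hloss_eq sum_distrib_left)
  also have "\<dots> = (\<Sum>k<d. (- AA n x y p (t-1) k * u k + SS (t-1) * ((u k)^2/2))
        + real t * (- Atp n x y (p (t-1)) k * u k + (u k)^2 / 2))"
    by (rule sum.distrib[symmetric])
  also have "\<dots> = (\<Sum>k<d. - (AA n x y p (t-1) k + real t * Atp n x y (p (t-1)) k) * u k + SS t * ((u k)^2/2))"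
    by (rule sum.cong[OF refl]) (simp add: SSt[symmetric] algebra_simps)
  finally show ?thesis .
qed

lemma w_formula:
  assumes g: "game_dyn n d x y T w p" and t: "t \<in> {1..T}" and k: "k < d"
  shows "w t k = (AA n x y p (t-1) k + real t * Atp n x y (p (t-1)) k) / SS t"
proof (rule quad_min[where d = d])
  show "SS t > 0" using t by (simp add: SS_pos)
  show "k < d" by fact
  show "\<forall>u\<in>Rd d. (\<Sum>k<d. - (AA n x y p (t-1) k + real t * Atp n x y (p (t-1)) k) * w t k + SS t * ((w t k)^2 / 2))
     \<le> (\<Sum>k<d. - (AA n x y p (t-1) k + real t * Atp n x y (p (t-1)) k) * u k + SS t * ((u k)^2 / 2))"
  proof
    fix u assume u: "u \<in> Rd d"
    have t1: "1 \<le> t" using t by simp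
    have "(\<Sum>j=1..t-1. real j * hloss n d x y p j (w t)) + real t * hloss n d x y p (t-1) (w t)
        \<le> (\<Sum>j=1..t-1. real j * hloss n d x y p j u) + real t * hloss n d x y p (t-1) u"
      using g t u unfolding game_dyn_def by blast
    then show "(\<Sum>k<d. - (AA n x y p (t-1) k + real t * Atp n x y (p (t-1)) k) * w t k + SS t * ((w t k)^2 / 2))
     \<le> (\<Sum>k<d. - (AA n x y p (t-1) k + real t * Atp n x y (p (t-1)) k) * u k + SS t * ((u k)^2 / 2))"
      by (simp only: obj_form[OF t1])
  qed
qed

lemma lower_scalar:
  fixes S A u :: real assumes "S > 0"
  shows "- (A^2) / (2 * S) \<le> - A * u + S * (u^2 / 2)"
proof -
  have "- A * u + S * (u^2 / 2) - (- (A^2) / (2 * S)) = (S * u - A)^2 / (2 * S)"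
    using assms by (simp add: field_simps power2_eq_square)
  moreover have "(S * u - A)^2 / (2 * S) \<ge> 0" using assms by simp
  ultimately show ?thesis by linarith
qed

lemma w_lower:
  assumes T: "1 \<le> T"
  shows "- (\<Sum>k<d. (AA n x y p T k)^2 / (2 * SS T)) \<le> (\<Sum>t=1..T. real t * hloss n d x y p t u)"
proof -
  have "- (\<Sum>k<d. (AA n x y p T k)^2 / (2 * SS T)) = (\<Sum>k<d. - ((AA n x y p T k)^2) / (2 * SS T))"
    by (simp add: sum_negf)
  also have "\<dots> \<le> (\<Sum>k<d. - AA n x y p T k * u k + SS T * ((u k)^2 / 2))"
    by (rule sum_mono, rule lower_scalar) (use T SS_pos in auto)
  also have "\<dots> = (\<Sum>t=1..T. real t * hloss n d x y p t u)"
    unfolding sum_hloss SS_sum AA_def by simp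
  finally show ?thesis .
qed

lemma w_tele:
  assumes wf: "\<forall>t\<in>{1..T}. \<forall>k<d. w t k = (AA n x y p (t-1) k + real t * Atp n x y (p (t-1)) k) / SS t"
  shows "M \<le> T \<Longrightarrow> (\<Sum>t=1..M. real t * hloss n d x y p t (w t))
      \<le> - (\<Sum>k<d. (AA n x y p M k)^2 / (2 * SS M))
        + (\<Sum>t=1..M. \<Sum>k<d. (Atp n x y (p t) k - Atp n x y (p (t-1)) k)^2)"
proof (induction M)
  case 0
  then show ?case by (simp add: SS_def)
next
  case (Suc M)
  let ?a = "\<lambda>t k. Atp n x y (p t) k"
  have IH: "(\<Sum>t=1..M. real t * hloss n d x y p t (w t))
      \<le> - (\<Sum>k<d. (AA n x y p M k)^2 / (2 * SS M))
        + (\<Sum>t=1..M. \<Sum>k<d. (?a t k - ?a (t-1) k)^2)" using Suc by simp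
  have st: "real (Suc M) * hloss n d x y p (Suc M) (w (Suc M))
     \<le> (\<Sum>k<d. (AA n x y p M k)^2 / (2 * SS M)) - (\<Sum>k<d. (AA n x y p (Suc M) k)^2 / (2 * SS (Suc M)))
       + (\<Sum>k<d. (?a (Suc M) k - ?a M k)^2)"
  proof -
    have "real (Suc M) * hloss n d x y p (Suc M) (w (Suc M))
        = (\<Sum>k<d. real (Suc M) * (- ?a (Suc M) k * w (Suc M) k + (w (Suc M) k)^2 / 2))"
      unfolding hloss_eq by (simp add: sum_distrib_left)
    also have "\<dots> \<le> (\<Sum>k<d. (AA n x y p M k)^2 / (2 * SS M) - (AA n x y p (Suc M) k)^2 / (2 * SS (Suc M))
       + (?a (Suc M) k - ?a M k)^2)"
    proof (rule sum_mono)
      fix k assume k: "k \<in> {..<d}"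
      have wk: "w (Suc M) k = (AA n x y p M k + real (Suc M) * ?a M k) / SS (Suc M)"
        using wf Suc.prems k by auto
      show "real (Suc M) * (- ?a (Suc M) k * w (Suc M) k + (w (Suc M) k)^2 / 2)
         \<le> (AA n x y p M k)^2 / (2 * SS M) - (AA n x y p (Suc M) k)^2 / (2 * SS (Suc M))
           + (?a (Suc M) k - ?a M k)^2"
        unfolding AA_Suc
      proof (rule step_scalar)
        show "1 \<le> real (Suc M)" by simp
        show "SS (Suc M) = real (Suc M) * (real (Suc M) + 1) / 2" by (simp add: SS_def)
        show "SS M = (real (Suc M) - 1) * real (Suc M) / 2" by (simp add: SS_def)
        show "w (Suc M) k = (AA n x y p M k + real (Suc M) * ?a M k) / SS (Suc M)" by (rule wk)
        show "real (Suc M) = 1 \<longrightarrow> AA n x y p M k = 0" by (simp add: AA_def)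
      qed
    qed
    also have "\<dots> = (\<Sum>k<d. (AA n x y p M k)^2 / (2 * SS M)) - (\<Sum>k<d. (AA n x y p (Suc M) k)^2 / (2 * SS (Suc M)))
       + (\<Sum>k<d. (?a (Suc M) k - ?a M k)^2)"
      by (simp add: sum.distrib sum_subtractf)
    finally show ?thesis .
  qed
  have "(\<Sum>t=1..Suc M. real t * hloss n d x y p t (w t))
      = (\<Sum>t=1..M. real t * hloss n d x y p t (w t)) + real (Suc M) * hloss n d x y p (Suc M) (w (Suc M))"
    by simp
  moreover have "(\<Sum>t=1..Suc M. \<Sum>k<d. (?a t k - ?a (t-1) k)^2)
      = (\<Sum>t=1..M. \<Sum>k<d. (?a t k - ?a (t-1) k)^2) + (\<Sum>k<d. (?a (Suc M) k - ?a M k)^2)"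
    by simp
  ultimately show ?case using IH st by linarith
qed



lemma wcs2:
  fixes c z :: "nat \<Rightarrow> real"
  shows "(\<Sum>i\<in>I. c i * z i)^2 \<le> (\<Sum>i\<in>I. \<bar>c i\<bar>) * (\<Sum>i\<in>I. \<bar>c i\<bar> * (z i)^2)"
proof -
  have "\<bar>\<Sum>i\<in>I. c i * z i\<bar> \<le> (\<Sum>i\<in>I. \<bar>c i * z i\<bar>)" by (rule sum_abs)
  also have "\<dots> = (\<Sum>i\<in>I. sqrt \<bar>c i\<bar> * (sqrt \<bar>c i\<bar> * \<bar>z i\<bar>))"
    by (rule sum.cong[OF refl]) (simp add: abs_mult mult.assoc[symmetric])
  finally have h: "\<bar>\<Sum>i\<in>I. c i * z i\<bar> \<le> (\<Sum>i\<in>I. sqrt \<bar>c i\<bar> * (sqrt \<bar>c i\<bar> * \<bar>z i\<bar>))" .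
  have "(\<Sum>i\<in>I. c i * z i)^2 = \<bar>\<Sum>i\<in>I. c i * z i\<bar>^2" by simp
  also have "\<dots> \<le> (\<Sum>i\<in>I. sqrt \<bar>c i\<bar> * (sqrt \<bar>c i\<bar> * \<bar>z i\<bar>))^2"
    by (rule power_mono[OF h]) simp
  also have "\<dots> \<le> (\<Sum>i\<in>I. (sqrt \<bar>c i\<bar>)^2) * (\<Sum>i\<in>I. (sqrt \<bar>c i\<bar> * \<bar>z i\<bar>)^2)"
    by (rule Cauchy_Schwarz_ineq_sum)
  also have "\<dots> = (\<Sum>i\<in>I. \<bar>c i\<bar>) * (\<Sum>i\<in>I. \<bar>c i\<bar> * (z i)^2)"
    by (simp add: power_mult_distrib)
  finally show ?thesis .
qed

lemma data_okD:
  assumes "data_ok n d x y \<gamma>"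
  shows "1 \<le> n" "\<And>i. i < n \<Longrightarrow> x i \<in> Rd d" "\<And>i. i < n \<Longrightarrow> nrm d (x i) \<le> 1"
    "\<And>i. i < n \<Longrightarrow> y i = -1 \<or> y i = 1" "0 < \<gamma>"
    "\<exists>ws\<in>Rd d. nrm d ws = 1 \<and> margin n d x y ws = \<gamma>"
  using assms unfolding data_ok_def by auto

lemma Atp_diff:
  assumes D: "data_ok n d x y \<gamma>"
  shows "(\<Sum>k<d. (Atp n x y q k - Atp n x y q' k)^2) \<le> (l1 n q q')^2"
proof -
  let ?c = "\<lambda>i. q i - q' i"
  have ysq: "(y i)^2 = 1" if "i < n" for i using data_okD(4)[OF D that] by auto
  have xsq: "(\<Sum>k<d. (x i k)^2) \<le> 1" if "i < n" for i
  proof -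
    have "(nrm d (x i))^2 \<le> 1" using data_okD(3)[OF D that] by (intro power_le_one) (auto simp: nrm_def ip_nonneg)
    then show ?thesis unfolding nrm_sq by (simp add: ip_def power2_eq_square)
  qed
  have "(\<Sum>k<d. (Atp n x y q k - Atp n x y q' k)^2) = (\<Sum>k<d. (\<Sum>i<n. ?c i * (y i * x i k))^2)"
    by (rule sum.cong[OF refl]) (simp add: Atp_def sum_subtractf[symmetric] algebra_simps)
  also have "\<dots> \<le> (\<Sum>k<d. (\<Sum>i<n. \<bar>?c i\<bar>) * (\<Sum>i<n. \<bar>?c i\<bar> * (y i * x i k)^2))"
    by (rule sum_mono, rule wcs2)
  also have "\<dots> = (\<Sum>i<n. \<bar>?c i\<bar>) * (\<Sum>k<d. \<Sum>i<n. \<bar>?c i\<bar> * (y i * x i k)^2)"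
    by (simp add: sum_distrib_left)
  also have "(\<Sum>k<d. \<Sum>i<n. \<bar>?c i\<bar> * (y i * x i k)^2) = (\<Sum>i<n. \<Sum>k<d. \<bar>?c i\<bar> * (y i * x i k)^2)"
    by (rule sum.swap)
  also have "\<dots> = (\<Sum>i<n. \<bar>?c i\<bar> * (\<Sum>k<d. (x i k)^2))"
  proof (rule sum.cong[OF refl])
    fix i assume "i \<in> {..<n}"
    then have "(y i)^2 = 1" using ysq by auto
    then show "(\<Sum>k<d. \<bar>?c i\<bar> * (y i * x i k)^2) = \<bar>?c i\<bar> * (\<Sum>k<d. (x i k)^2)"
      by (simp add: power_mult_distrib sum_distrib_left)
  qed
  also have "\<dots> \<le> (\<Sum>i<n. \<bar>?c i\<bar> * 1)"
    by (rule sum_mono, rule mult_left_mono) (use xsq in auto)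
  finally have "(\<Sum>k<d. (Atp n x y q k - Atp n x y q' k)^2) \<le> (\<Sum>i<n. \<bar>?c i\<bar>) * (\<Sum>i<n. \<bar>?c i\<bar> * 1)"
    by (simp add: mult_left_mono sum_nonneg)
  then show ?thesis by (simp add: l1_def power2_eq_square)
qed



lemma lloss_form:
  "(\<Sum>s\<in>J. real s * lloss n d x y w s q)
   = (\<Sum>i<n. (\<Sum>s\<in>J. real s * (y i * ip d (x i) (w s))) * q i) + (\<Sum>s\<in>J. real s * (-(1/2) * ip d (w s) (w s)))"
proof -
  have "(\<Sum>s\<in>J. real s * lloss n d x y w s q)
      = (\<Sum>s\<in>J. (\<Sum>i<n. real s * (y i * ip d (x i) (w s)) * q i) + real s * (-(1/2) * ip d (w s) (w s)))"
    by (rule sum.cong[OF refl])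
       (simp add: lloss_def gpay_def pAw_def nrm_sq sum_distrib_left algebra_simps)
  also have "\<dots> = (\<Sum>s\<in>J. \<Sum>i<n. real s * (y i * ip d (x i) (w s)) * q i) + (\<Sum>s\<in>J. real s * (-(1/2) * ip d (w s) (w s)))"
    by (rule sum.distrib)
  also have "(\<Sum>s\<in>J. \<Sum>i<n. real s * (y i * ip d (x i) (w s)) * q i) = (\<Sum>i<n. \<Sum>s\<in>J. real s * (y i * ip d (x i) (w s)) * q i)"
    by (rule sum.swap)
  also have "\<dots> = (\<Sum>i<n. (\<Sum>s\<in>J. real s * (y i * ip d (x i) (w s))) * q i)"
    by (simp add: sum_distrib_right)
  finally show ?thesis .
qed

definition FF where
  "FF n d x y w m q = (\<Sum>s=1..m. real s * lloss n d x y w s q) + 4 * DE n q (unif n)"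

lemma FF_form:
  "FF n d x y w m q = (\<Sum>i<n. (\<Sum>s=1..m. real s * (y i * ip d (x i) (w s))) * q i)
     + (\<Sum>s=1..m. real s * (-(1/2) * ip d (w s) (w s))) + 4 * DE n q (unif n)"
  unfolding FF_def lloss_form ..

lemma p_min:
  assumes g: "game_dyn n d x y T w p" and n: "1 \<le> n" and m: "m \<le> T" and yy: "yy \<in> simplex n"
  shows "p m \<in> simplex n" "FF n d x y w m (p m) + 2 * (l1 n yy (p m))^2 \<le> FF n d x y w m yy"
proof -
  have pm: "p m \<in> simplex n"
  proof (cases "m = 0")
    case True then show ?thesis using g n unif_simplex by (simp add: game_dyn_def)
  next
    case False then show ?thesis using g m unfolding game_dyn_def by auto
  qed
  show "p m \<in> simplex n" by (rule pm)
  have min: "\<forall>q\<in>simplex n. FF n d x y w m (p m) \<le> FF n d x y w m q"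
  proof (cases "m = 0")
    case True
    have "\<forall>q\<in>simplex n. 0 \<le> DE n q (unif n)"
      using DE_nonneg[OF n _ unif_simplex[OF n]] by (auto simp: unif_def)
    then show ?thesis using True g by (simp add: FF_def game_dyn_def DE_self)
  next
    case False
    then have "m \<in> {1..T}" using m by auto
    then have "\<forall>q\<in>simplex n. 1/4 * (\<Sum>s=1..m. real s * lloss n d x y w s (p m)) + DE n (p m) (unif n)
         \<le> 1/4 * (\<Sum>s=1..m. real s * lloss n d x y w s q) + DE n q (unif n)"
      using g unfolding game_dyn_def by blast
    then show ?thesis by (auto simp: FF_def)
  qed
  show "FF n d x y w m (p m) + 2 * (l1 n yy (p m))^2 \<le> FF n d x y w m yy"
    unfolding FF_form
    by (rule strong_min[OF n pm _ yy]) (use min in \<open>simp add: FF_form\<close>)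
qed

lemma p_tele:
  assumes g: "game_dyn n d x y T w p" and n: "1 \<le> n"
  shows "M \<le> T \<Longrightarrow> (\<Sum>t=1..M. real t * lloss n d x y w t (p t)) + 2 * (\<Sum>t=1..M. (l1 n (p t) (p (t-1)))^2)
     \<le> FF n d x y w M (p M)"
proof (induction M)
  case 0
  have "p 0 = unif n" using g by (simp add: game_dyn_def)
  then show ?case by (simp add: FF_def DE_self)
next
  case (Suc M)
  have IH: "(\<Sum>t=1..M. real t * lloss n d x y w t (p t)) + 2 * (\<Sum>t=1..M. (l1 n (p t) (p (t-1)))^2)
     \<le> FF n d x y w M (p M)" using Suc by simp
  have ps: "p (Suc M) \<in> simplex n" using p_min(1)[OF g n Suc.prems unif_simplex[OF n]] .
  have st: "FF n d x y w M (p M) + 2 * (l1 n (p (Suc M)) (p M))^2 \<le> FF n d x y w M (p (Suc M))"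
    using p_min(2)[OF g n _ ps, of M] Suc.prems by simp
  have "FF n d x y w (Suc M) (p (Suc M)) = FF n d x y w M (p (Suc M)) + real (Suc M) * lloss n d x y w (Suc M) (p (Suc M))"
    by (simp add: FF_def)
  then show ?case using IH st by simp
qed

lemma p_side:
  assumes g: "game_dyn n d x y T w p" and n: "1 \<le> n" and q: "q \<in> simplex n"
  shows "(\<Sum>t=1..T. real t * lloss n d x y w t (p t)) + 2 * (\<Sum>t=1..T. (l1 n (p t) (p (t-1)))^2)
     \<le> (\<Sum>t=1..T. real t * lloss n d x y w t q) + 4 * ln (real n)"
proof -
  have "FF n d x y w T (p T) \<le> FF n d x y w T q"
    using p_min(2)[OF g n order.refl q] by (smt (verit) zero_le_power2)
  also have "\<dots> \<le> (\<Sum>t=1..T. real t * lloss n d x y w t q) + 4 * ln (real n)"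
    using DE_unif_le[OF n q] by (simp add: FF_def)
  finally show ?thesis using p_tele[OF g n order.refl] by linarith
qed



lemma w_side:
  assumes D: "data_ok n d x y \<gamma>" and T: "1 \<le> T" and g: "game_dyn n d x y T w p"
  shows "(\<Sum>t=1..T. real t * hloss n d x y p t (w t))
     \<le> (\<Sum>t=1..T. real t * hloss n d x y p t u) + (\<Sum>t=1..T. (l1 n (p t) (p (t-1)))^2)"
proof -
  have wf: "\<forall>t\<in>{1..T}. \<forall>k<d. w t k = (AA n x y p (t-1) k + real t * Atp n x y (p (t-1)) k) / SS t"
    using w_formula[OF g] by blast
  have "(\<Sum>t=1..T. real t * hloss n d x y p t (w t))
      \<le> - (\<Sum>k<d. (AA n x y p T k)^2 / (2 * SS T))
        + (\<Sum>t=1..T. \<Sum>k<d. (Atp n x y (p t) k - Atp n x y (p (t-1)) k)^2)"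
    by (rule w_tele[OF wf order.refl])
  moreover have "(\<Sum>t=1..T. \<Sum>k<d. (Atp n x y (p t) k - Atp n x y (p (t-1)) k)^2) \<le> (\<Sum>t=1..T. (l1 n (p t) (p (t-1)))^2)"
    by (rule sum_mono, rule Atp_diff[OF D])
  moreover have "- (\<Sum>k<d. (AA n x y p T k)^2 / (2 * SS T)) \<le> (\<Sum>t=1..T. real t * hloss n d x y p t u)"
    by (rule w_lower[OF T])
  ultimately show ?thesis by linarith
qed

lemma hl_ll: "hloss n d x y p t (w t) = - lloss n d x y w t (p t)"
  by (simp add: hloss_def lloss_def)

lemma part1:
  assumes D: "data_ok n d x y \<gamma>" and T: "1 \<le> T" and g: "game_dyn n d x y T w p"
  shows "regret_w n d x y T w p \<le> 2 * (\<Sum>t=1..T. (l1 n (p t) (p (t-1)))^2)"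
    "regret_p n d x y T w p \<le> 4 * ln (real n) - 2 * (\<Sum>t=1..T. (l1 n (p t) (p (t-1)))^2)"
proof -
  let ?L = "(\<Sum>t=1..T. (l1 n (p t) (p (t-1)))^2)"
  have L0: "0 \<le> ?L" by (simp add: sum_nonneg)
  have n: "1 \<le> n" using data_okD(1)[OF D] .
  have "(\<Sum>t=1..T. real t * hloss n d x y p t (w t)) - ?L
      \<le> (INF u\<in>Rd d. \<Sum>t=1..T. real t * hloss n d x y p t u)"
  proof (rule cINF_greatest)
    show "Rd d \<noteq> {}" using Rd_def by auto
    fix u show "(\<Sum>t=1..T. real t * hloss n d x y p t (w t)) - ?L \<le> (\<Sum>t=1..T. real t * hloss n d x y p t u)"
      using w_side[OF D T g, of u] by linarith
  qed
  then show "regret_w n d x y T w p \<le> 2 * ?L" using L0 by (simp add: regret_w_def)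
  have "(\<Sum>t=1..T. real t * lloss n d x y w t (p t)) + 2 * ?L - 4 * ln (real n)
      \<le> (INF q\<in>simplex n. \<Sum>t=1..T. real t * lloss n d x y w t q)"
  proof (rule cINF_greatest)
    show "simplex n \<noteq> {}" using unif_simplex[OF n] by auto
    fix q assume "q \<in> simplex n"
    then show "(\<Sum>t=1..T. real t * lloss n d x y w t (p t)) + 2 * ?L - 4 * ln (real n)
        \<le> (\<Sum>t=1..T. real t * lloss n d x y w t q)"
      using p_side[OF g n] by fastforce
  qed
  then show "regret_p n d x y T w p \<le> 4 * ln (real n) - 2 * ?L" by (simp add: regret_p_def)
qed

lemma ip_scale: "ip d v (\<lambda>k. c * u k) = c * ip d v u"
  by (simp add: ip_def sum_distrib_left algebra_simps)

lemma ip_comm: "ip d u v = ip d v u"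
  by (simp add: ip_def mult.commute)

lemma ip_sum: "(\<Sum>t\<in>J. f t * ip d v (w t)) = ip d v (\<lambda>k. \<Sum>t\<in>J. f t * w t k)"
proof -
  have "(\<Sum>t\<in>J. f t * ip d v (w t)) = (\<Sum>t\<in>J. \<Sum>k<d. f t * (v k * w t k))"
    by (simp add: ip_def sum_distrib_left)
  also have "\<dots> = (\<Sum>k<d. \<Sum>t\<in>J. f t * (v k * w t k))" by (rule sum.swap)
  also have "\<dots> = ip d v (\<lambda>k. \<Sum>t\<in>J. f t * w t k)"
    by (simp add: ip_def sum_distrib_left algebra_simps)
  finally show ?thesis .
qed

lemma wbar_k: "wbar T w k = (\<Sum>t=1..T. real t * w t k) / SS T"
  by (simp add: wbar_def SS_sum[symmetric])

lemma jensen_w: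
  assumes T: "1 \<le> T"
  shows "SS T * ip d (wbar T w) (wbar T w) \<le> (\<Sum>t=1..T. real t * ip d (w t) (w t))"
proof -
  have S: "SS T > 0" using SS_pos[OF T] .
  have "SS T * ip d (wbar T w) (wbar T w) = (\<Sum>k<d. (\<Sum>t=1..T. real t * w t k)^2 / SS T)"
    unfolding ip_def wbar_k using S by (simp add: sum_distrib_left power2_eq_square)
  also have "\<dots> \<le> (\<Sum>k<d. \<Sum>t=1..T. real t * (w t k)^2)"
  proof (rule sum_mono)
    fix k
    have "(\<Sum>t=1..T. real t * w t k)^2 \<le> (\<Sum>t=1..T. \<bar>real t\<bar>) * (\<Sum>t=1..T. \<bar>real t\<bar> * (w t k)^2)"
      by (rule wcs2)
    then have "(\<Sum>t=1..T. real t * w t k)^2 \<le> SS T * (\<Sum>t=1..T. real t * (w t k)^2)"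
      by (simp add: SS_sum[symmetric])
    then show "(\<Sum>t=1..T. real t * w t k)^2 / SS T \<le> (\<Sum>t=1..T. real t * (w t k)^2)"
      using S by (simp add: divide_le_eq mult.commute)
  qed
  also have "\<dots> = (\<Sum>t=1..T. \<Sum>k<d. real t * (w t k)^2)" by (rule sum.swap)
  also have "\<dots> = (\<Sum>t=1..T. real t * ip d (w t) (w t))"
    by (simp add: ip_def sum_distrib_left power2_eq_square)
  finally show ?thesis .
qed

lemma margin_le:
  assumes "i < n" shows "margin n d x y v \<le> y i * ip d (x i) v"
  unfolding margin_def using assms by (intro Min_le) auto

lemma margin_core:
  assumes D: "data_ok n d x y \<gamma>" and T: "1 \<le> T" and g: "game_dyn n d x y T w p" and i: "i < n"
  shows "\<gamma>^2 / 2 + ip d (wbar T w) (wbar T w) / 2 - 4 * ln (real n) / SS T \<le> y i * ip d (x i) (wbar T w)"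
proof -
  have n: "1 \<le> n" using data_okD(1)[OF D] .
  have gp: "0 < \<gamma>" using data_okD(5)[OF D] .
  obtain ws where ws: "ws \<in> Rd d" "nrm d ws = 1" "margin n d x y ws = \<gamma>" using data_okD(6)[OF D] by blast
  have S: "SS T > 0" using SS_pos[OF T] .
  define u where "u = (\<lambda>k. \<gamma> * ws k)"
  define e where "e = (\<lambda>j. if j = i then 1 else (0::real))"
  have e: "e \<in> simplex n" using i by (auto simp: simplex_def e_def)
  have pAwe: "pAw n d x y e v = y i * ip d (x i) v" for v
  proof -
    have "pAw n d x y e v = (\<Sum>j<n. if j = i then y j * ip d (x j) v else 0)"
      unfolding pAw_def by (rule sum.cong[OF refl]) (simp add: e_def)
    also have "\<dots> = y i * ip d (x i) v" using i by (simp add: sum.delta)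
    finally show ?thesis .
  qed
  let ?L = "(\<Sum>t=1..T. (l1 n (p t) (p (t-1)))^2)"
  have L0: "0 \<le> ?L" by (simp add: sum_nonneg)
  have wsw: "ip d ws ws = 1" using ws(2) nrm_sq[of d ws] by simp
  have hu: "hloss n d x y p t u \<le> - (\<gamma>^2 / 2)" if t: "t \<in> {1..T}" for t
  proof -
    have pt: "p t \<in> simplex n" using g t unfolding game_dyn_def by blast
    have "pAw n d x y (p t) ws = (\<Sum>j<n. p t j * (y j * ip d (x j) ws))" by (simp add: pAw_def)
    also have "\<dots> \<ge> (\<Sum>j<n. p t j * \<gamma>)"
      by (rule sum_mono, rule mult_left_mono) (use pt ws(3) margin_le in \<open>auto simp: simplex_def\<close>)
    finally have "\<gamma> \<le> pAw n d x y (p t) ws" using pt by (simp add: simplex_def sum_distrib_right[symmetric])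
    moreover have "hloss n d x y p t u = - (\<gamma> * pAw n d x y (p t) ws) + \<gamma>^2 / 2"
      unfolding hloss_def gpay_def pAw_ip nrm_sq u_def
      by (simp add: ip_scale ip_comm[of d "\<lambda>k. \<gamma> * ws k"] wsw power2_eq_square)
    ultimately show ?thesis using gp by (simp add: power2_eq_square)
  qed
  have "(\<Sum>t=1..T. real t * hloss n d x y p t u) \<le> (\<Sum>t=1..T. real t * (- (\<gamma>^2 / 2)))"
    by (rule sum_mono, rule mult_left_mono) (use hu in auto)
  also have "\<dots> = (\<Sum>t=1..T. real t) * (- (\<gamma>^2 / 2))" by (rule sum_distrib_right[symmetric])
  also have "\<dots> = - SS T * \<gamma>^2 / 2" unfolding SS_sum by simp
  finally have A: "(\<Sum>t=1..T. real t * hloss n d x y p t u) \<le> - SS T * \<gamma>^2 / 2" .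
  have le: "(\<Sum>t=1..T. real t * lloss n d x y w t e) = y i * (SS T * ip d (x i) (wbar T w))
       - 1/2 * (\<Sum>t=1..T. real t * ip d (w t) (w t))"
  proof -
    have "(\<Sum>t=1..T. real t * lloss n d x y w t e) = (\<Sum>t=1..T. y i * (real t * ip d (x i) (w t)) - 1/2 * (real t * ip d (w t) (w t)))"
      by (rule sum.cong[OF refl]) (simp add: lloss_def gpay_def pAwe nrm_sq algebra_simps)
    also have "\<dots> = y i * (\<Sum>t=1..T. real t * ip d (x i) (w t)) - 1/2 * (\<Sum>t=1..T. real t * ip d (w t) (w t))"
      by (simp add: sum_subtractf sum_distrib_left)
    also have "(\<Sum>t=1..T. real t * ip d (x i) (w t)) = SS T * ip d (x i) (wbar T w)"
    proof -
      have "SS T * ip d (x i) (wbar T w) = (\<Sum>k<d. SS T * (x i k * wbar T w k))"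
        by (simp add: ip_def sum_distrib_left)
      also have "\<dots> = (\<Sum>k<d. x i k * (\<Sum>t=1..T. real t * w t k))"
        by (rule sum.cong[OF refl]) (use S in \<open>simp add: wbar_k\<close>)
      also have "\<dots> = (\<Sum>t=1..T. real t * ip d (x i) (w t))"
        unfolding ip_sum by (simp add: ip_def)
      finally show ?thesis by simp
    qed
    finally show ?thesis .
  qed
  have B: "(\<Sum>t=1..T. real t * lloss n d x y w t (p t)) + 2 * ?L \<le> (\<Sum>t=1..T. real t * lloss n d x y w t e) + 4 * ln (real n)"
    by (rule p_side[OF g n e])
  have C: "(\<Sum>t=1..T. real t * hloss n d x y p t (w t)) \<le> (\<Sum>t=1..T. real t * hloss n d x y p t u) + ?L"
    by (rule w_side[OF D T g])
  have hw: "(\<Sum>t=1..T. real t * hloss n d x y p t (w t)) = - (\<Sum>t=1..T. real t * lloss n d x y w t (p t))"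
    by (simp add: hl_ll sum_negf[symmetric])
  have J: "SS T * ip d (wbar T w) (wbar T w) \<le> (\<Sum>t=1..T. real t * ip d (w t) (w t))" by (rule jensen_w[OF T])
  have "SS T * (\<gamma>^2 / 2 + ip d (wbar T w) (wbar T w) / 2) \<le> SS T * (y i * ip d (x i) (wbar T w)) + 4 * ln (real n)"
    using A B C hw J le L0 by (simp add: algebra_simps)
  then have "\<gamma>^2 / 2 + ip d (wbar T w) (wbar T w) / 2 \<le> y i * ip d (x i) (wbar T w) + 4 * ln (real n) / SS T"
    using S by (simp add: field_simps)
  then show ?thesis by linarith
qed



lemma part2:
  assumes D: "data_ok n d x y \<gamma>" and T: "1 \<le> T" and g: "game_dyn n d x y T w p"
    and TC: "real T \<ge> 4 * sqrt (ln (real n)) / \<gamma>"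
  shows "margin n d x y (wbar T w) \<ge> 0"
proof -
  have n: "1 \<le> n" using data_okD(1)[OF D] .
  have gp: "0 < \<gamma>" using data_okD(5)[OF D] .
  have ln0: "0 \<le> ln (real n)" using n by (simp add: ln_ge_zero)
  have S: "SS T > 0" using SS_pos[OF T] .
  have "4 * sqrt (ln (real n)) \<le> real T * \<gamma>" using TC gp by (simp add: divide_le_eq)
  then have "(4 * sqrt (ln (real n)))^2 \<le> (real T * \<gamma>)^2"
    by (rule power_mono) (use ln0 in simp)
  moreover have "(sqrt (ln (real n)))^2 = ln (real n)" using ln0 by (rule real_sqrt_pow2)
  ultimately have h1: "16 * ln (real n) \<le> (real T)^2 * \<gamma>^2" by (simp add: power_mult_distrib)
  have h2: "(real T)^2 \<le> 2 * SS T" by (simp add: SS_def power2_eq_square algebra_simps)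
  have "(real T)^2 * \<gamma>^2 \<le> 2 * SS T * \<gamma>^2" using h2 by (simp add: mult_right_mono)
  with h1 have "4 * ln (real n) \<le> SS T * (\<gamma>^2 / 2)" by simp
  then have X: "4 * ln (real n) / SS T \<le> \<gamma>^2 / 2" using S by (simp add: divide_le_eq mult.commute)
  show ?thesis
    unfolding margin_def
  proof (subst Min_ge_iff)
    show "finite ((\<lambda>i. y i * ip d (x i) (wbar T w)) ` {..<n})" by simp
    show "(\<lambda>i. y i * ip d (x i) (wbar T w)) ` {..<n} \<noteq> {}" using n by (auto simp: lessThan_empty_iff)
    show "\<forall>a\<in>(\<lambda>i. y i * ip d (x i) (wbar T w)) ` {..<n}. 0 \<le> a"
    proof
      fix a assume "a \<in> (\<lambda>i. y i * ip d (x i) (wbar T w)) ` {..<n}"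
      then obtain i where i: "i < n" and a: "a = y i * ip d (x i) (wbar T w)" by auto
      have "\<gamma>^2 / 2 + ip d (wbar T w) (wbar T w) / 2 - 4 * ln (real n) / SS T \<le> a"
        using margin_core[OF D T g i] a by simp
      then show "0 \<le> a" using X ip_nonneg[of d "wbar T w"] by linarith
    qed
  qed
qed



definition "PP n d x y t = fst (snd (accp n d x y t))"
definition "VV n d x y t = fst (accp n d x y t)"
definition "GG n d x y t = snd (snd (accp n d x y t))"
definition "WW n d x y t = (\<lambda>k. if k < d then (AA n x y (PP n d x y) (t-1) k + real t * Atp n x y (PP n d x y (t-1)) k) / SS t else 0)"

lemma VV_Suc: "VV n d x y (Suc t) = (\<lambda>k. VV n d x y t k - real (Suc t) / (2 * (real (Suc t) + 1)) * (GG n d x y t k - Atp n x y (PP n d x y t) k))"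
proof (cases "accp n d x y t")
  case (fields a b c)
  have "VV n d x y t = a" "PP n d x y t = b" "GG n d x y t = c" using fields by (simp_all add: VV_def PP_def GG_def)
  then show ?thesis using fields by (intro ext) (auto simp: VV_def PP_def GG_def Let_def)
qed

lemma PP_Suc0: "PP n d x y (Suc t) = (\<lambda>i. if i < n then exp (- y i * ip d (\<lambda>k. VV n d x y t k - real (Suc t) / (2 * (real (Suc t) + 1)) * (GG n d x y t k - Atp n x y (PP n d x y t) k)) (x i))
   / (\<Sum>j<n. exp (- y j * ip d (\<lambda>k. VV n d x y t k - real (Suc t) / (2 * (real (Suc t) + 1)) * (GG n d x y t k - Atp n x y (PP n d x y t) k)) (x j))) else 0)"
proof (cases "accp n d x y t")
  case (fields a b c)
  have "VV n d x y t = a" "PP n d x y t = b" "GG n d x y t = c" using fields by (simp_all add: VV_def PP_def GG_def)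
  then show ?thesis using fields by (intro ext) (auto simp: VV_def PP_def GG_def Let_def)
qed

lemma PP_Suc: "PP n d x y (Suc t) = (\<lambda>i. if i < n then exp (- y i * ip d (VV n d x y (Suc t)) (x i)) / (\<Sum>j<n. exp (- y j * ip d (VV n d x y (Suc t)) (x j))) else 0)"
  unfolding VV_Suc by (rule PP_Suc0)

lemma GG_Suc: "GG n d x y (Suc t) = (\<lambda>k. real (Suc t) / (real (Suc t) + 1) * (GG n d x y t k - Atp n x y (PP n d x y (Suc t)) k))"
proof (cases "accp n d x y t")
  case (fields a b c)
  have "VV n d x y t = a" "PP n d x y t = b" "GG n d x y t = c" using fields by (simp_all add: VV_def PP_def GG_def)
  then show ?thesis using fields by (intro ext) (auto simp: VV_def PP_def GG_def Let_def)
qed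

lemma PP_0: "PP n d x y 0 = unif n" by (simp add: PP_def)
lemma VV_0: "VV n d x y 0 = (\<lambda>k. 0)" by (simp add: VV_def)
lemma GG_0: "GG n d x y 0 = (\<lambda>k. 0)" by (simp add: GG_def)

lemma gg_scalar: fixes s A a :: real assumes "s > 0"
  shows "s / (s + 1) * (- A / s - a) = - (A + s * a) / (s + 1)"
proof -
  have h: "- A / s - a = - (A + s * a) / s" using assms by (simp add: field_simps)
  have "s + 1 > 0" using assms by simp
  then show ?thesis unfolding h using assms by simp
qed

lemma vv_scalar: fixes s A a :: real assumes "s > 0"
  shows "- (s / (2 * (s + 1)) * (- A / s - a)) = s * ((A + s * a) / (s * (s + 1) / 2)) / 4"
proof -
  have h: "- A / s - a = - (A + s * a) / s" using assms by (simp add: field_simps)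
  have p: "s + 1 > 0" using assms by simp
  have c: "s / (2 * (s + 1)) * (Y / s) = Y / (2 * (s + 1))" for Y
    using assms by simp
  have l: "- (s / (2 * (s + 1)) * (- (A + s * a) / s)) = (A + s * a) / (2 * (s + 1))"
    unfolding c by (simp only: minus_divide_left[symmetric] minus_minus)
  have r1: "s * (X / (s * (s + 1) / 2)) = X / ((s + 1) / 2)" for X
  proof -
    have "s * (s + 1) / 2 = s * ((s + 1) / 2)" by simp
    then show ?thesis using assms by simp
  qed
  have r: "s * ((A + s * a) / (s * (s + 1) / 2)) / 4 = (A + s * a) / (2 * (s + 1))"
    unfolding r1 using p by (simp add: field_simps)
  show ?thesis unfolding h l r ..
qed

lemma GG_inv: "GG n d x y t k = - AA n x y (PP n d x y) t k / (real t + 1)"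
proof (induction t)
  case 0 then show ?case by (simp add: GG_0 AA_def)
next
  case (Suc t)
  have e: "real t + 1 = real (Suc t)" by simp
  show ?case unfolding GG_Suc AA_Suc Suc e
    by (rule gg_scalar) simp
qed

lemma VV_inv: "k < d \<Longrightarrow> VV n d x y t k = (\<Sum>s=1..t. real s * WW n d x y s k) / 4"
proof (induction t)
  case 0 then show ?case by (simp add: VV_0)
next
  case (Suc t)
  have e: "real t + 1 = real (Suc t)" by simp
  have "VV n d x y (Suc t) k = (\<Sum>s=1..t. real s * WW n d x y s k) / 4
      + - (real (Suc t) / (2 * (real (Suc t) + 1)) * (- AA n x y (PP n d x y) t k / real (Suc t) - Atp n x y (PP n d x y t) k))"
    unfolding VV_Suc GG_inv e using Suc by simp
  also have "\<dots> = (\<Sum>s=1..t. real s * WW n d x y s k) / 4 + real (Suc t) * WW n d x y (Suc t) k / 4"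
    unfolding vv_scalar[of "real (Suc t)", OF of_nat_0_less_iff[THEN iffD2, OF zero_less_Suc]]
    using Suc.prems by (simp add: WW_def SS_def)
  also have "\<dots> = (\<Sum>s=1..Suc t. real s * WW n d x y s k) / 4" by (simp add: add_divide_distrib)
  finally show ?case .
qed

lemma PP_smax: "1 \<le> t \<Longrightarrow> PP n d x y t = smax n (\<lambda>i. 4 * (y i * ip d (x i) (VV n d x y t)))"
proof -
  assume "1 \<le> t"
  then obtain s where t: "t = Suc s" by (cases t) auto
  show ?thesis unfolding t PP_Suc smax_def by (intro ext) (auto simp: ip_comm[of d "x _"])
qed

lemma PP_simplex: "1 \<le> n \<Longrightarrow> PP n d x y t \<in> simplex n"
  by (cases t) (simp_all add: PP_0 unif_simplex PP_smax smax_simplex del: One_nat_def)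

lemma PP_pos: "1 \<le> n \<Longrightarrow> i < n \<Longrightarrow> PP n d x y t i > 0"
  by (cases t) (simp_all add: PP_0 unif_def PP_smax smax_pos del: One_nat_def)

lemma ip_cong: "(\<And>k. k < d \<Longrightarrow> u k = v k) \<Longrightarrow> ip d z u = ip d z v"
  by (simp add: ip_def)



lemma quad_le:
  fixes S b u :: real assumes "S > 0"
  shows "- b * (b / S) + S * ((b / S)^2 / 2) \<le> - b * u + S * (u^2 / 2)"
proof -
  have e: "(- b * u + S * u^2 / 2) - (- b * (b/S) + S * (b/S)^2 / 2) = S / 2 * (u - b / S)^2"
    by (rule quad_scalar[OF assms])
  have "0 \<le> S / 2 * (u - b / S)^2" using assms by simp
  then show ?thesis using e by simp
qed

lemma cc_eq:
  assumes k: "\<And>k. k < d \<Longrightarrow> V k = (\<Sum>s=1..t. real s * W s k) / 4"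
  shows "(\<Sum>s=1..t. real s * (y i * ip d (x i) (W s))) = 4 * (y i * ip d (x i) V)"
proof -
  have "(\<Sum>s=1..t. real s * (y i * ip d (x i) (W s))) = y i * (\<Sum>s=1..t. real s * ip d (x i) (W s))"
    by (simp add: sum_distrib_left algebra_simps)
  also have "\<dots> = y i * ip d (x i) (\<lambda>k. \<Sum>s=1..t. real s * W s k)" by (simp add: ip_sum)
  also have "ip d (x i) (\<lambda>k. \<Sum>s=1..t. real s * W s k) = ip d (x i) (\<lambda>k. 4 * V k)"
    by (rule ip_cong) (simp add: k)
  also have "\<dots> = 4 * ip d (x i) V" by (rule ip_scale)
  finally show ?thesis by simp
qed

lemma game_dyn_acc:
  assumes n: "1 \<le> n"
  shows "game_dyn n d x y T (WW n d x y) (PP n d x y)"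
  unfolding game_dyn_def
proof (intro conjI ballI)
  show "PP n d x y 0 = unif n" by (rule PP_0)
next
  fix t assume t: "t \<in> {1..T}"
  then have t1: "1 \<le> t" by simp
  show "WW n d x y t \<in> Rd d" by (simp add: Rd_def WW_def)
  {
    fix u
    show "(\<Sum>j = 1..t - 1. real j * hloss n d x y (PP n d x y) j (WW n d x y t)) + real t * hloss n d x y (PP n d x y) (t - 1) (WW n d x y t)
        \<le> (\<Sum>j = 1..t - 1. real j * hloss n d x y (PP n d x y) j u) + real t * hloss n d x y (PP n d x y) (t - 1) u"
      unfolding obj_form[OF t1]
    proof (rule sum_mono)
      fix k assume k: "k \<in> {..<d}"
      let ?B = "AA n x y (PP n d x y) (t - 1) k + real t * Atp n x y (PP n d x y (t - 1)) k"
      have w: "WW n d x y t k = ?B / SS t" using k by (simp add: WW_def)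
      show "- ?B * WW n d x y t k + SS t * ((WW n d x y t k)^2 / 2) \<le> - ?B * u k + SS t * ((u k)^2 / 2)"
        unfolding w by (rule quad_le) (use t1 SS_pos in auto)
    qed
  }
  show "PP n d x y t \<in> simplex n" by (rule PP_simplex[OF n])
  {
    fix q assume q: "q \<in> simplex n"
    let ?cc = "\<lambda>i. \<Sum>s=1..t. real s * (y i * ip d (x i) (WW n d x y s))"
    let ?K = "\<Sum>s=1..t. real s * (-(1/2) * ip d (WW n d x y s) (WW n d x y s))"
    let ?Z = "\<Sum>j<n. exp (- ?cc j / 4)"
    have cc: "?cc = (\<lambda>i. 4 * (y i * ip d (x i) (VV n d x y t)))"
      by (intro ext cc_eq) (simp add: VV_inv)
    have Pt: "PP n d x y t = smax n ?cc" unfolding cc by (rule PP_smax[OF t1])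
    have Ps: "PP n d x y t \<in> simplex n" by (rule PP_simplex[OF n])
    have FFq: "FF n d x y (WW n d x y) t q = 4 * DE n q (PP n d x y t) + 4 * ln (real n) - 4 * ln ?Z + ?K"
    proof -
      have "FF n d x y (WW n d x y) t q = ((\<Sum>i<n. ?cc i * q i) + 4 * DE n q (unif n)) + ?K"
        unfolding FF_form by (simp only: ac_simps)
      also have "\<dots> = 4 * DE n q (smax n ?cc) + 4 * ln (real n) - 4 * ln ?Z + ?K"
        unfolding F_ident[OF n q] ..
      finally show ?thesis unfolding Pt[symmetric] .
    qed
    have FFp: "FF n d x y (WW n d x y) t (PP n d x y t) = 4 * ln (real n) - 4 * ln ?Z + ?K"
    proof -
      have "FF n d x y (WW n d x y) t (PP n d x y t) = ((\<Sum>i<n. ?cc i * PP n d x y t i) + 4 * DE n (PP n d x y t) (unif n)) + ?K"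
        unfolding FF_form by (simp only: ac_simps)
      also have "\<dots> = 4 * DE n (PP n d x y t) (smax n ?cc) + 4 * ln (real n) - 4 * ln ?Z + ?K"
        unfolding F_ident[OF n Ps] ..
      also have "\<dots> = 4 * ln (real n) - 4 * ln ?Z + ?K"
        unfolding Pt[symmetric] DE_self by simp
      finally show ?thesis .
    qed
    have "0 \<le> DE n q (PP n d x y t)" by (rule DE_nonneg[OF n q Ps PP_pos[OF n]])
    then have "FF n d x y (WW n d x y) t (PP n d x y t) \<le> FF n d x y (WW n d x y) t q" using FFq FFp by simp
    then show "1 / 4 * (\<Sum>s = 1..t. real s * lloss n d x y (WW n d x y) s (PP n d x y t)) + DE n (PP n d x y t) (unif n)
        \<le> 1 / 4 * (\<Sum>s = 1..t. real s * lloss n d x y (WW n d x y) s q) + DE n q (unif n)"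
      by (simp add: FF_def)
  }
qed



lemma ip_cs: "ip d u v \<le> nrm d u * nrm d v"
proof -
  have "(ip d u v)^2 \<le> ip d u u * ip d v v"
    unfolding ip_def using Cauchy_Schwarz_ineq_sum[of u v "{..<d}"] by (simp add: power2_eq_square)
  then have "sqrt ((ip d u v)^2) \<le> sqrt (ip d u u * ip d v v)" by (rule real_sqrt_le_mono)
  then have "\<bar>ip d u v\<bar> \<le> nrm d u * nrm d v" by (simp add: nrm_def real_sqrt_mult)
  then show ?thesis by simp
qed

lemma ip_div: "ip d v (\<lambda>k. f k / S) = ip d v f / S"
  by (simp add: ip_def sum_divide_distrib)

lemma ip_add: "ip d v (\<lambda>k. f k + g k) = ip d v f + ip d v g"
  by (simp add: ip_def sum.distrib algebra_simps)

lemma pAw_ge: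
  assumes q: "q \<in> simplex n" and m: "margin n d x y ws = \<gamma>"
  shows "\<gamma> \<le> pAw n d x y q ws"
proof -
  have "(\<Sum>j<n. q j * \<gamma>) \<le> (\<Sum>j<n. q j * (y j * ip d (x j) ws))"
    by (rule sum_mono, rule mult_left_mono) (use q m margin_le in \<open>auto simp: simplex_def\<close>)
  moreover have "(\<Sum>j<n. q j * \<gamma>) = \<gamma>" using q by (simp add: simplex_def sum_distrib_right[symmetric])
  ultimately show ?thesis by (simp add: pAw_def)
qed

lemma part3:
  assumes D: "data_ok n d x y \<gamma>" and T: "1 \<le> T"
  shows "nmargin n d x y (vT n d x y T) \<ge> 1 * (\<gamma> - 8 * ln (real n) / (\<gamma> * real T * (real T + 1)))"
proof -
  have n: "1 \<le> n" using data_okD(1)[OF D] .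
  have gp: "0 < \<gamma>" using data_okD(5)[OF D] .
  have ln0: "0 \<le> ln (real n)" using n by (simp add: ln_ge_zero)
  obtain ws where ws: "ws \<in> Rd d" "nrm d ws = 1" "margin n d x y ws = \<gamma>" using data_okD(6)[OF D] by blast
  have S: "SS T > 0" using SS_pos[OF T] .
  let ?W = "WW n d x y"
  let ?P = "PP n d x y"
  let ?wb = "wbar T ?W"
  have g: "game_dyn n d x y T ?W ?P" by (rule game_dyn_acc[OF n])
  have ia: "\<gamma> \<le> ip d ws (Atp n x y (?P s))" for s
    using pAw_ge[OF PP_simplex[OF n, of d x y s] ws(3)] by (simp add: pAw_ip ip_comm)
  have iAA: "SS m * \<gamma> \<le> ip d ws (AA n x y ?P m)" for m
  proof -
    have "ip d ws (AA n x y ?P m) = (\<Sum>j=1..m. real j * ip d ws (Atp n x y (?P j)))"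
      unfolding AA_def[abs_def] ip_sum by simp
    also have "\<dots> \<ge> (\<Sum>j=1..m. real j * \<gamma>)"
      by (rule sum_mono, rule mult_left_mono) (use ia in auto)
    also have "(\<Sum>j=1..m. real j * \<gamma>) = SS m * \<gamma>" by (simp only: sum_distrib_right[symmetric] SS_sum)
    finally show ?thesis .
  qed
  have iW: "\<gamma> \<le> ip d ws (?W t)" if t: "1 \<le> t" for t
  proof -
    have "ip d ws (?W t) = ip d ws (\<lambda>k. (AA n x y ?P (t-1) k + real t * Atp n x y (?P (t-1)) k) / SS t)"
      by (rule ip_cong) (simp add: WW_def)
    also have "\<dots> = (ip d ws (AA n x y ?P (t-1)) + real t * ip d ws (Atp n x y (?P (t-1)))) / SS t"
      unfolding ip_div ip_add ip_scale by simp
    finally have e: "ip d ws (?W t) = (ip d ws (AA n x y ?P (t-1)) + real t * ip d ws (Atp n x y (?P (t-1)))) / SS t" .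
    have "SS (t-1) * \<gamma> + real t * \<gamma> \<le> ip d ws (AA n x y ?P (t-1)) + real t * ip d ws (Atp n x y (?P (t-1)))"
      using iAA[of "t-1"] ia[of "t-1"] by (simp add: add_mono mult_left_mono)
    moreover have "SS (t-1) + real t = SS t" using t SS_Suc[of "t-1"] by simp
    then have "SS t * \<gamma> = SS (t-1) * \<gamma> + real t * \<gamma>" by (metis distrib_right)
    ultimately have "SS t * \<gamma> \<le> ip d ws (AA n x y ?P (t-1)) + real t * ip d ws (Atp n x y (?P (t-1)))"
      by linarith
    then show ?thesis unfolding e using SS_pos[OF t] by (simp add: le_divide_eq mult.commute)
  qed
  have iwb: "\<gamma> \<le> ip d ws ?wb"
  proof -
    have "ip d ws ?wb = ip d ws (\<lambda>k. (\<Sum>t=1..T. real t * ?W t k) / SS T)"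
      by (rule ip_cong) (simp add: wbar_k)
    also have "\<dots> = (\<Sum>t=1..T. real t * ip d ws (?W t)) / SS T"
      unfolding ip_div ip_sum ..
    finally have e: "ip d ws ?wb = (\<Sum>t=1..T. real t * ip d ws (?W t)) / SS T" .
    have "(\<Sum>t=1..T. real t * \<gamma>) \<le> (\<Sum>t=1..T. real t * ip d ws (?W t))"
      by (rule sum_mono, rule mult_left_mono) (use iW in auto)
    moreover have "(\<Sum>t=1..T. real t * \<gamma>) = SS T * \<gamma>" by (simp only: sum_distrib_right[symmetric] SS_sum)
    ultimately show ?thesis unfolding e using S by (simp add: le_divide_eq mult.commute)
  qed
  define N where "N = nrm d ?wb"
  have N2: "N^2 = ip d ?wb ?wb" by (simp add: N_def nrm_sq)
  have gN: "\<gamma> \<le> N" using iwb ip_cs[of d ws ?wb] ws(2) by (simp add: N_def)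
  have Np: "N > 0" using gN gp by simp
  define X where "X = 4 * ln (real n) / SS T"
  have X0: "0 \<le> X" using ln0 S by (simp add: X_def)
  have Xeq: "X / \<gamma> = 8 * ln (real n) / (\<gamma> * real T * (real T + 1))"
    by (simp add: X_def SS_def field_simps)
  have per: "N * (\<gamma> - X / \<gamma>) \<le> y i * ip d (x i) ?wb" if i: "i < n" for i
  proof -
    have mc: "\<gamma>^2 / 2 + N^2 / 2 - X \<le> y i * ip d (x i) ?wb"
      using margin_core[OF D T g i] N2 by (simp add: X_def)
    have a1: "\<gamma> * N \<le> \<gamma>^2 / 2 + N^2 / 2"
    proof -
      have "0 \<le> (\<gamma> - N)^2" by simp
      then show ?thesis by (simp add: power2_eq_square algebra_simps)
    qed
    have a2: "X \<le> N * (X / \<gamma>)"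
    proof -
      have "X * 1 \<le> X * (N / \<gamma>)" using gN gp X0 by (intro mult_left_mono) (simp_all add: le_divide_eq)
      then show ?thesis by (simp add: algebra_simps)
    qed
    have "N * (\<gamma> - X / \<gamma>) = \<gamma> * N - N * (X / \<gamma>)" by (simp add: algebra_simps)
    then show ?thesis using mc a1 a2 by linarith
  qed
  let ?V = "vT n d x y T"
  have Vk: "?V k = SS T / 4 * ?wb k" if "k < d" for k
    using VV_inv[OF that, of n x y T] S by (simp add: vT_def VV_def wbar_k)
  have ipV: "ip d z ?V = SS T / 4 * ip d z ?wb" for z
  proof -
    have "ip d z ?V = ip d z (\<lambda>k. SS T / 4 * ?wb k)" by (rule ip_cong) (simp add: Vk)
    also have "\<dots> = SS T / 4 * ip d z ?wb" by (rule ip_scale)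
    finally show ?thesis .
  qed
  have nV: "nrm d ?V = SS T / 4 * N"
  proof -
    have "ip d ?V ?V = (SS T / 4)^2 * ip d ?wb ?wb"
      using ipV[of ?V] ip_comm[of d ?V ?wb] ipV[of ?wb] by (simp add: power2_eq_square)
    then show ?thesis using S by (simp add: nrm_def N_def real_sqrt_mult)
  qed
  have mV: "SS T / 4 * N * (\<gamma> - X / \<gamma>) \<le> margin n d x y ?V"
    unfolding margin_def
  proof (subst Min_ge_iff)
    show "finite ((\<lambda>i. y i * ip d (x i) ?V) ` {..<n})" by simp
    show "(\<lambda>i. y i * ip d (x i) ?V) ` {..<n} \<noteq> {}" using n by (auto simp: lessThan_empty_iff)
    show "\<forall>a\<in>(\<lambda>i. y i * ip d (x i) ?V) ` {..<n}. SS T / 4 * N * (\<gamma> - X / \<gamma>) \<le> a"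
    proof
      fix a assume "a \<in> (\<lambda>i. y i * ip d (x i) ?V) ` {..<n}"
      then obtain i where i: "i < n" and a: "a = y i * ip d (x i) ?V" by auto
      have "SS T / 4 * (N * (\<gamma> - X / \<gamma>)) \<le> SS T / 4 * (y i * ip d (x i) ?wb)"
        using per[OF i] S by (intro mult_left_mono) simp_all
      moreover have e: "a = SS T / 4 * (y i * ip d (x i) ?wb)" unfolding a ipV by (rule mult.left_commute)
      ultimately show "SS T / 4 * N * (\<gamma> - X / \<gamma>) \<le> a" by (simp only: mult.assoc)
    qed
  qed
  have pos: "SS T / 4 * N > 0" using S Np by simp
  have "\<gamma> - X / \<gamma> \<le> margin n d x y ?V / nrm d ?V"
    unfolding nV using mV pos by (simp add: le_divide_eq mult.commute)
  then show ?thesis unfolding nmargin_def Xeq by simp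
qed


theorem theorem4:
  shows
  "(\<forall>n d x y \<gamma> T w p. data_ok n d x y \<gamma> \<and> 1 \<le> T \<and> game_dyn n d x y T w p \<longrightarrow>
       regret_w n d x y T w p \<le> 2 * (\<Sum>t=1..T. (l1 n (p t) (p (t-1)))\<^sup>2) \<and>
       regret_p n d x y T w p \<le> 4 * ln (real n) - 2 * (\<Sum>t=1..T. (l1 n (p t) (p (t-1)))\<^sup>2))
   \<and> (\<exists>C>0. \<forall>n d x y \<gamma> T w p. data_ok n d x y \<gamma> \<and> 1 \<le> T \<and> game_dyn n d x y T w p
         \<and> real T \<ge> C * sqrt (ln (real n)) / \<gamma> \<longrightarrow> margin n d x y (wbar T w) \<ge> 0)
   \<and> (\<exists>c>0. \<forall>n d x y \<gamma> T. data_ok n d x y \<gamma> \<and> 1 \<le> T \<longrightarrow>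
         nmargin n d x y (vT n d x y T) \<ge> c * (\<gamma> - 8 * ln (real n) / (\<gamma> * real T * (real T + 1))))"
proof -
  have P1: "\<forall>n d x y \<gamma> T w p. data_ok n d x y \<gamma> \<and> 1 \<le> T \<and> game_dyn n d x y T w p \<longrightarrow>
       regret_w n d x y T w p \<le> 2 * (\<Sum>t=1..T. (l1 n (p t) (p (t-1)))\<^sup>2) \<and>
       regret_p n d x y T w p \<le> 4 * ln (real n) - 2 * (\<Sum>t=1..T. (l1 n (p t) (p (t-1)))\<^sup>2)"
    using part1 by blast
  have P2: "\<exists>C>0. \<forall>n d x y \<gamma> T w p. data_ok n d x y \<gamma> \<and> 1 \<le> T \<and> game_dyn n d x y T w p
         \<and> real T \<ge> C * sqrt (ln (real n)) / \<gamma> \<longrightarrow> margin n d x y (wbar T w) \<ge> 0"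
    by (rule exI[of _ 4]) (use part2 in auto)
  have P3: "\<exists>c>0. \<forall>n d x y \<gamma> T. data_ok n d x y \<gamma> \<and> 1 \<le> T \<longrightarrow>
         nmargin n d x y (vT n d x y T) \<ge> c * (\<gamma> - 8 * ln (real n) / (\<gamma> * real T * (real T + 1)))"
    by (rule exI[of _ 1]) (use part3 in auto)
  show ?thesis using P1 P2 P3 by blast
qed

end
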